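(* Let $(\mathfrak A,\varphi)$ be a C$^*$-non-commutative probability space and let $\mathbf X=(X_1,\dots,X_n)$, $\mathbf Y=(Y_1,\dots,Y_m)$ be tuples of self-adjoint operators in $\mathfrak A$ such that $(\mathbb C\langle\mathbf X\rangle,\mathbb C\langle\mathbf Y\rangle)$ is tracially bi-partite, and suppose $\mathbf X,\mathbf Y$ satisfy no algebraic relations other than $[X_i,Y_j]=0$ for all $i,j$; let $\mathcal A=\mathbb C\langle\mathbf X,\mathbf Y\rangle$. Assume there is a C$^*$-non-commutative probability space $(\mathcal A_0,\tau_0)$ with $\tau_0$ tracial and tuples of self-adjoint operators $\mathbf X'=(X_1',\dots,X_n')$, $\mathbf Y'=(Y_1',\dots,Y_m')$ in $\mathcal A_0$ such that \[\varphi(X_{i_1}\cdots X_{i_p}Y_{j_1}\cdots Y_{j_q})=\tau_0(X'_{i_1}\cdots X'_{i_p}Y'_{j_q}\cdots Y'_{j_1})\] for all $p,q\ge0$ and all indices. Then there is an isometry $\Psi:L_2(\mathcal A,\varphi)\to L_2(\mathcal A_0,\tau_0)$ with $\Psi(X_{i_1}\cdots X_{i_p}Y_{j_1}\cdots Y_{j_q})=X'_{i_1}\cdots X'_{i_p}Y'_{j_q}\cdots Y'_{j_1}$ for all $p,q\ge0$ and all indices. Moreover, if $P$ is the orthogonal projection of $L_2(\mathcal A_0,\tau_0)$ onto $\Psi(L_2(\mathcal A,\varphi))$ and the free conjugate variable $\mathcal J(X_i':\mathbb C\langle\hat{\mathbf X}_i',\mathbf Y'\rangle)$ exists, then $\mathcal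 J_\ell(X_i:(\mathbb C\langle\hat{\mathbf X}_i\rangle,\mathbb C\langle\mathbf Y\rangle))$ exists and \[\mathcal J_\ell(X_i:(\mathbb C\langle\hat{\mathbf X}_i\rangle,\mathbb C\langle\mathbf Y\rangle))=\Psi^{-1}\big(P(\mathcal J(X_i':\mathbb C\langle\hat{\mathbf X}_i',\mathbf Y'\rangle))\big).\] A similar result holds for the right bi-free conjugate variables.
   Context: A C$^*$-non-commutative probability space is a unital C$^*$-algebra with a state; $L_2(\mathcal B,\varphi)$ is the closure of a subalgebra $\mathcal B$ in the GNS space with $\langle Z_1,Z_2\rangle=\varphi(Z_2^*Z_1)$, and $\varphi(Z\zeta):=\langle Z\zeta,1\rangle$. $\hat{\mathbf X}_i$ denotes $\mathbf X$ with $X_i$ removed. $(\mathbb C\langle\mathbf X\rangle,\mathbb C\langle\mathbf Y\rangle)$ is tracially bi-partite if every element of $\mathbb C\langle\mathbf X\rangle$ commutes with every element of $\mathbb C\langle\mathbf Y\rangle$ and $\varphi$ is tracial on each of these two algebras. Left bi-free difference quotient: with left letters $L$ and right letters $R$ and $X\in L$, for a word $Z_1\cdots Z_k$ in $L\cup R$, $\partial_{\ell,X}(Z_1\cdots Z_k)=\sum_{q:Z_q=X}\big(Z_1\cdots Z_{q-1}\prod_{p>q,Z_p\in R}Z_p\big)\otimes\prod_{p>q,Z_p\in L}Z_p$ (products in increasing index order). The left bi-free conjugate variable $\mathcal J_\ell(X_i:(\mathbb C\langle\hat{\mathbf X}_i\rangle,\mathbb C\langle\mathbf Y\rangle))$ is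 the unique (if it exists) $\xi\in L_2(\mathcal A,\varphi)$ with $\varphi(W\xi)=(\varphi\otimes\varphi)(\partial_{\ell,X_i}(W))$ for every word $W$ in the left letters $X_1,\dots,X_n$ and right letters $Y_1,\dots,Y_m$ (the paper defines it equivalently via bi-free cumulants). The free conjugate variable $\mathcal J(X_i':\mathbb C\langle\hat{\mathbf X}_i',\mathbf Y'\rangle)$ (Voiculescu) is the $\xi'\in L_2(\mathbb C\langle\mathbf X',\mathbf Y'\rangle,\tau_0)$ with $\tau_0(p(\mathbf X',\mathbf Y')\xi')=(\tau_0\otimes\tau_0)((\partial_ip)(\mathbf X',\mathbf Y'))$ for all non-commutative polynomials $p$, where $\partial_i$ is the free difference quotient (the derivation with $\partial_i(X_i)=1\otimes1$, killing the other variables, with bimodule structure $a(P\otimes Q)b=aP\otimes Qb$). *)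

theory Defs
  imports Complex_Main
begin

section \<open>Unital C*-algebras (carrier = whole type) and states\<close>

record 'a cstar_alg =
  cadd :: "'a \<Rightarrow> 'a \<Rightarrow> 'a"
  cmul :: "'a \<Rightarrow> 'a \<Rightarrow> 'a"
  csc  :: "complex \<Rightarrow> 'a \<Rightarrow> 'a"
  cstar :: "'a \<Rightarrow> 'a"
  cnorm :: "'a \<Rightarrow> real"
  czero :: 'a
  cone :: 'a

definition csub :: "'a cstar_alg \<Rightarrow> 'a \<Rightarrow> 'a \<Rightarrow> 'a" where
  "csub A a b = cadd A a (csc A (-1) b)"

definition cstar_algebra :: "'a cstar_alg \<Rightarrow> bool" where
  "cstar_algebra A \<longleftrightarrow>
    (\<forall>a b c. cadd A (cadd A a b) c = cadd A a (cadd A b c)) \<and>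
    (\<forall>a b. cadd A a b = cadd A b a) \<and>
    (\<forall>a. cadd A a (czero A) = a) \<and>
    (\<forall>a. cadd A a (csc A (-1) a) = czero A) \<and>
    (\<forall>a. csc A 1 a = a) \<and>
    (\<forall>s t a. csc A s (csc A t a) = csc A (s * t) a) \<and>
    (\<forall>s t a. csc A (s + t) a = cadd A (csc A s a) (csc A t a)) \<and>
    (\<forall>s a b. csc A s (cadd A a b) = cadd A (csc A s a) (csc A s b)) \<and>
    (\<forall>a b c. cmul A (cmul A a b) c = cmul A a (cmul A b c)) \<and>
    (\<forall>a b c. cmul A a (cadd A b c) = cadd A (cmul A a b) (cmul A a c)) \<and>
    (\<forall>a b c. cmul A (cadd A a b) c = cadd A (cmul A a c) (cmul A b c)) \<and>
    (\<forall>s a b. cmul A (csc A s a) b = csc A s (cmul A a b)) \<and>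
    (\<forall>s a b. cmul A a (csc A s b) = csc A s (cmul A a b)) \<and>
    (\<forall>a. cmul A (cone A) a = a \<and> cmul A a (cone A) = a) \<and>
    (\<forall>a. cstar A (cstar A a) = a) \<and>
    (\<forall>a b. cstar A (cadd A a b) = cadd A (cstar A a) (cstar A b)) \<and>
    (\<forall>s a. cstar A (csc A s a) = csc A (cnj s) (cstar A a)) \<and>
    (\<forall>a b. cstar A (cmul A a b) = cmul A (cstar A b) (cstar A a)) \<and>
    (\<forall>a. 0 \<le> cnorm A a) \<and>
    (\<forall>a. cnorm A a = 0 \<longleftrightarrow> a = czero A) \<and>
    (\<forall>a b. cnorm A (cadd A a b) \<le> cnorm A a + cnorm A b) \<and>
    (\<forall>s a. cnorm A (csc A s a) = cmod s * cnorm A a) \<and>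
    (\<forall>a b. cnorm A (cmul A a b) \<le> cnorm A a * cnorm A b) \<and>
    (\<forall>a. cnorm A (cmul A (cstar A a) a) = (cnorm A a)^2) \<and>
    (\<forall>f :: nat \<Rightarrow> 'a. (\<forall>e>0. \<exists>N. \<forall>k\<ge>N. \<forall>l\<ge>N. cnorm A (csub A (f k) (f l)) < e) \<longrightarrow>
        (\<exists>x. \<forall>e>0. \<exists>N. \<forall>k\<ge>N. cnorm A (csub A (f k) x) < e))"

definition is_state :: "'a cstar_alg \<Rightarrow> ('a \<Rightarrow> complex) \<Rightarrow> bool" where
  "is_state A \<phi> \<longleftrightarrow>
    (\<forall>a b. \<phi> (cadd A a b) = \<phi> a + \<phi> b) \<and>
    (\<forall>s a. \<phi> (csc A s a) = s * \<phi> a) \<and>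
    \<phi> (cone A) = 1 \<and>
    (\<forall>a. Im (\<phi> (cmul A (cstar A a) a)) = 0 \<and> 0 \<le> Re (\<phi> (cmul A (cstar A a) a)))"

definition cstar_ncps :: "'a cstar_alg \<Rightarrow> ('a \<Rightarrow> complex) \<Rightarrow> bool" where
  "cstar_ncps A \<phi> \<longleftrightarrow> cstar_algebra A \<and> is_state A \<phi>"

definition tracial_on :: "'a cstar_alg \<Rightarrow> ('a \<Rightarrow> complex) \<Rightarrow> 'a set \<Rightarrow> bool" where
  "tracial_on A \<phi> B \<longleftrightarrow> (\<forall>a\<in>B. \<forall>b\<in>B. \<phi> (cmul A a b) = \<phi> (cmul A b a))"

text \<open>Unital subalgebra generated by a set S (= C<S>).\<close>
inductive_set alg_gen :: "'a cstar_alg \<Rightarrow> 'a set \<Rightarrow> 'a set" for A S where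
  one: "cone A \<in> alg_gen A S"
| gen: "s \<in> S \<Longrightarrow> s \<in> alg_gen A S"
| add: "a \<in> alg_gen A S \<Longrightarrow> b \<in> alg_gen A S \<Longrightarrow> cadd A a b \<in> alg_gen A S"
| mul: "a \<in> alg_gen A S \<Longrightarrow> b \<in> alg_gen A S \<Longrightarrow> cmul A a b \<in> alg_gen A S"
| sc: "a \<in> alg_gen A S \<Longrightarrow> csc A c a \<in> alg_gen A S"

record 'h hspace =
  hadd :: "'h \<Rightarrow> 'h \<Rightarrow> 'h"
  hsc :: "complex \<Rightarrow> 'h \<Rightarrow> 'h"
  hzero :: 'h
  hinner :: "'h \<Rightarrow> 'h \<Rightarrow> complex"

definition hsub :: "'h hspace \<Rightarrow> 'h \<Rightarrow> 'h \<Rightarrow> 'h" where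
  "hsub H x y = hadd H x (hsc H (-1) y)"

definition hnorm :: "'h hspace \<Rightarrow> 'h \<Rightarrow> real" where
  "hnorm H x = sqrt (Re (hinner H x x))"

definition hilbert :: "'h hspace \<Rightarrow> bool" where
  "hilbert H \<longleftrightarrow>
    (\<forall>x y z. hadd H (hadd H x y) z = hadd H x (hadd H y z)) \<and>
    (\<forall>x y. hadd H x y = hadd H y x) \<and>
    (\<forall>x. hadd H x (hzero H) = x) \<and>
    (\<forall>x. hadd H x (hsc H (-1) x) = hzero H) \<and>
    (\<forall>x. hsc H 1 x = x) \<and>
    (\<forall>s t x. hsc H s (hsc H t x) = hsc H (s * t) x) \<and>
    (\<forall>s t x. hsc H (s + t) x = hadd H (hsc H s x) (hsc H t x)) \<and>
    (\<forall>s x y. hsc H s (hadd H x y) = hadd H (hsc H s x) (hsc H s y)) \<and>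
    (\<forall>x y z. hinner H (hadd H x y) z = hinner H x z + hinner H y z) \<and>
    (\<forall>s x y. hinner H (hsc H s x) y = s * hinner H x y) \<and>
    (\<forall>x y. hinner H x y = cnj (hinner H y x)) \<and>
    (\<forall>x. Im (hinner H x x) = 0 \<and> 0 \<le> Re (hinner H x x)) \<and>
    (\<forall>x. hinner H x x = 0 \<longrightarrow> x = hzero H) \<and>
    (\<forall>f :: nat \<Rightarrow> 'h. (\<forall>e>0. \<exists>N. \<forall>k\<ge>N. \<forall>l\<ge>N. hnorm H (hsub H (f k) (f l)) < e) \<longrightarrow>
        (\<exists>x. \<forall>e>0. \<exists>N. \<forall>k\<ge>N. hnorm H (hsub H (f k) x) < e))"

definition hclosure :: "'h hspace \<Rightarrow> 'h set \<Rightarrow> 'h set" where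
  "hclosure H S = {x. \<forall>e>0. \<exists>s\<in>S. hnorm H (hsub H x s) < e}"

definition orth_proj :: "'h hspace \<Rightarrow> 'h set \<Rightarrow> ('h \<Rightarrow> 'h) \<Rightarrow> bool" where
  "orth_proj H M P \<longleftrightarrow> (\<forall>x. P x \<in> M \<and> (\<forall>y\<in>M. hinner H (hsub H x (P x)) y = 0))"

definition isometry_on :: "'h hspace \<Rightarrow> 'h set \<Rightarrow> 'k hspace \<Rightarrow> ('h \<Rightarrow> 'k) \<Rightarrow> bool" where
  "isometry_on H M H' \<Psi> \<longleftrightarrow>
    (\<forall>x\<in>M. \<forall>y\<in>M. \<Psi> (hadd H x y) = hadd H' (\<Psi> x) (\<Psi> y)) \<and>
    (\<forall>s. \<forall>x\<in>M. \<Psi> (hsc H s x) = hsc H' s (\<Psi> x)) \<and>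
    (\<forall>x\<in>M. hnorm H' (\<Psi> x) = hnorm H x)"

text \<open>(H, iota, pi) is a GNS realization of (A, phi): iota A is dense in H,
  <iota a, iota b> = phi(b* a), and pi a is the (bounded, linear) left action of a.\<close>
definition gns :: "'a cstar_alg \<Rightarrow> ('a \<Rightarrow> complex) \<Rightarrow> 'h hspace \<Rightarrow> ('a \<Rightarrow> 'h)
    \<Rightarrow> ('a \<Rightarrow> 'h \<Rightarrow> 'h) \<Rightarrow> bool" where
  "gns A \<phi> H \<iota> \<pi> \<longleftrightarrow> hilbert H \<and>
    (\<forall>a b. \<iota> (cadd A a b) = hadd H (\<iota> a) (\<iota> b)) \<and>
    (\<forall>s a. \<iota> (csc A s a) = hsc H s (\<iota> a)) \<and>
    (\<forall>a b. hinner H (\<iota> a) (\<iota> b) = \<phi> (cmul A (cstar A b) a)) \<and>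
    hclosure H (range \<iota>) = UNIV \<and>
    (\<forall>a b. \<pi> a (\<iota> b) = \<iota> (cmul A a b)) \<and>
    (\<forall>a x y. \<pi> a (hadd H x y) = hadd H (\<pi> a x) (\<pi> a y)) \<and>
    (\<forall>a s x. \<pi> a (hsc H s x) = hsc H s (\<pi> a x)) \<and>
    (\<forall>a. \<exists>C. \<forall>x. hnorm H (\<pi> a x) \<le> C * hnorm H x)"

definition L2 :: "'h hspace \<Rightarrow> ('a \<Rightarrow> 'h) \<Rightarrow> 'a set \<Rightarrow> 'h set" where
  "L2 H \<iota> B = hclosure H (\<iota> ` B)"

datatype lett = LX nat | LY nat

fun isLX :: "lett \<Rightarrow> bool" where
  "isLX (LX _) = True" | "isLX (LY _) = False"

fun isLY :: "lett \<Rightarrow> bool" where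
  "isLY (LX _) = False" | "isLY (LY _) = True"

fun valid_lett :: "nat \<Rightarrow> nat \<Rightarrow> lett \<Rightarrow> bool" where
  "valid_lett n m (LX i) = (i < n)" | "valid_lett n m (LY j) = (j < m)"

definition valid_word :: "nat \<Rightarrow> nat \<Rightarrow> lett list \<Rightarrow> bool" where
  "valid_word n m w \<longleftrightarrow> (\<forall>l\<in>set w. valid_lett n m l)"

fun lett_val :: "(nat \<Rightarrow> 'a) \<Rightarrow> (nat \<Rightarrow> 'a) \<Rightarrow> lett \<Rightarrow> 'a" where
  "lett_val X Y (LX i) = X i" | "lett_val X Y (LY j) = Y j"

fun evalw :: "'a cstar_alg \<Rightarrow> (nat \<Rightarrow> 'a) \<Rightarrow> (nat \<Rightarrow> 'a) \<Rightarrow> lett list \<Rightarrow> 'a" where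
  "evalw A X Y [] = cone A"
| "evalw A X Y (l # w) = cmul A (lett_val X Y l) (evalw A X Y w)"

definition eval_lin :: "'a cstar_alg \<Rightarrow> (nat \<Rightarrow> 'a) \<Rightarrow> (nat \<Rightarrow> 'a) \<Rightarrow> (complex \<times> lett list) list \<Rightarrow> 'a" where
  "eval_lin A X Y cs = foldr (\<lambda>(c, w) acc. cadd A (csc A c (evalw A X Y w)) acc) cs (czero A)"

text \<open>X, Y satisfy no algebraic relations other than [X_i, Y_j] = 0: a linear combination of
  words in the X_i, Y_j vanishes only if it lies in the ideal generated by the commutators
  in the free algebra, i.e. only if, for every class of words equal modulo commuting X-letters
  past Y-letters (class determined by (X-subword, Y-subword)), the coefficients sum to 0.\<close>
definition no_other_relations :: "'a cstar_alg \<Rightarrow> nat \<Rightarrow> nat \<Rightarrow> (nat \<Rightarrow> 'a) \<Rightarrow> (nat \<Rightarrow> 'a) \<Rightarrow> bool" where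
  "no_other_relations A n m X Y \<longleftrightarrow>
    (\<forall>cs. (\<forall>(c, w)\<in>set cs. valid_word n m w) \<longrightarrow> eval_lin A X Y cs = czero A \<longrightarrow>
      (\<forall>u v. sum_list (map fst (filter (\<lambda>(c, w). filter isLX w = u \<and> filter isLY w = v) cs)) = 0))"

definition tracially_bipartite :: "'a cstar_alg \<Rightarrow> ('a \<Rightarrow> complex) \<Rightarrow> nat \<Rightarrow> nat
    \<Rightarrow> (nat \<Rightarrow> 'a) \<Rightarrow> (nat \<Rightarrow> 'a) \<Rightarrow> bool" where
  "tracially_bipartite A \<phi> n m X Y \<longleftrightarrow>
    (\<forall>a\<in>alg_gen A (X ` {..<n}). \<forall>b\<in>alg_gen A (Y ` {..<m}). cmul A a b = cmul A b a) \<and>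
    tracial_on A \<phi> (alg_gen A (X ` {..<n})) \<and> tracial_on A \<phi> (alg_gen A (Y ` {..<m}))"

text \<open>(phi (x) phi)(partial_{l, X_i}(w)) for a word w.\<close>
definition bfdq_val :: "'a cstar_alg \<Rightarrow> ('a \<Rightarrow> complex) \<Rightarrow> (nat \<Rightarrow> 'a) \<Rightarrow> (nat \<Rightarrow> 'a)
    \<Rightarrow> nat \<Rightarrow> lett list \<Rightarrow> complex" where
  "bfdq_val A \<phi> X Y i w =
    (\<Sum>q\<in>{q. q < length w \<and> w ! q = LX i}.
       \<phi> (evalw A X Y (take q w @ filter isLY (drop (Suc q) w))) *
       \<phi> (evalw A X Y (filter isLX (drop (Suc q) w))))"

definition is_left_bf_conj :: "'a cstar_alg \<Rightarrow> ('a \<Rightarrow> complex) \<Rightarrow> 'h hspace \<Rightarrow> ('a \<Rightarrow> 'h)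
    \<Rightarrow> ('a \<Rightarrow> 'h \<Rightarrow> 'h) \<Rightarrow> nat \<Rightarrow> nat \<Rightarrow> (nat \<Rightarrow> 'a) \<Rightarrow> (nat \<Rightarrow> 'a) \<Rightarrow> nat \<Rightarrow> 'h \<Rightarrow> bool" where
  "is_left_bf_conj A \<phi> H \<iota> \<pi> n m X Y i \<xi> \<longleftrightarrow>
    \<xi> \<in> L2 H \<iota> (alg_gen A (X ` {..<n} \<union> Y ` {..<m})) \<and>
    (\<forall>w. valid_word n m w \<longrightarrow>
       hinner H (\<pi> (evalw A X Y w) \<xi>) (\<iota> (cone A)) = bfdq_val A \<phi> X Y i w)"

text \<open>(tau (x) tau)((partial_i w)(X', Y')) for a monomial w.\<close>
definition fdq_val :: "'a cstar_alg \<Rightarrow> ('a \<Rightarrow> complex) \<Rightarrow> (nat \<Rightarrow> 'a) \<Rightarrow> (nat \<Rightarrow> 'a)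
    \<Rightarrow> nat \<Rightarrow> lett list \<Rightarrow> complex" where
  "fdq_val A \<tau> X Y i w =
    (\<Sum>q\<in>{q. q < length w \<and> w ! q = LX i}.
       \<tau> (evalw A X Y (take q w)) * \<tau> (evalw A X Y (drop (Suc q) w)))"

text \<open>xi is Voiculescu's free conjugate variable J(X'_i : C<X'^_i, Y'>) in L_2(C<X',Y'>, tau)
  (tested on monomials; by linearity equivalent to testing on all polynomials).\<close>
definition is_free_conj :: "'a cstar_alg \<Rightarrow> ('a \<Rightarrow> complex) \<Rightarrow> 'h hspace \<Rightarrow> ('a \<Rightarrow> 'h)
    \<Rightarrow> ('a \<Rightarrow> 'h \<Rightarrow> 'h) \<Rightarrow> nat \<Rightarrow> nat \<Rightarrow> (nat \<Rightarrow> 'a) \<Rightarrow> (nat \<Rightarrow> 'a) \<Rightarrow> nat \<Rightarrow> 'h \<Rightarrow> bool" where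
  "is_free_conj A \<tau> H \<iota> \<pi> n m X Y i \<xi> \<longleftrightarrow>
    \<xi> \<in> L2 H \<iota> (alg_gen A (X ` {..<n} \<union> Y ` {..<m})) \<and>
    (\<forall>w. valid_word n m w \<longrightarrow>
       hinner H (\<pi> (evalw A X Y w) \<xi>) (\<iota> (cone A)) = fdq_val A \<tau> X Y i w)"

end

theory Submission
  imports Defs
begin


lemma ca:
  assumes "cstar_algebra A"
  shows ca_add_assoc: "cadd A (cadd A a b) c = cadd A a (cadd A b c)"
  and ca_add_comm: "cadd A a b = cadd A b a"
  and ca_add_zero: "cadd A a (czero A) = a"
  and ca_add_neg: "cadd A a (csc A (-1) a) = czero A"
  and ca_sc_one: "csc A 1 a = a"
  and ca_sc_sc: "csc A s (csc A t a) = csc A (s*t) a"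
  and ca_sc_add_l: "csc A (s + t) a = cadd A (csc A s a) (csc A t a)"
  and ca_sc_add_r: "csc A s (cadd A a b) = cadd A (csc A s a) (csc A s b)"
  and ca_mul_assoc: "cmul A (cmul A a b) c = cmul A a (cmul A b c)"
  and ca_distr_l: "cmul A a (cadd A b c) = cadd A (cmul A a b) (cmul A a c)"
  and ca_distr_r: "cmul A (cadd A a b) c = cadd A (cmul A a c) (cmul A b c)"
  and ca_sc_mul_l: "cmul A (csc A s a) b = csc A s (cmul A a b)"
  and ca_sc_mul_r: "cmul A a (csc A s b) = csc A s (cmul A a b)"
  and ca_one_l: "cmul A (cone A) a = a"
  and ca_one_r: "cmul A a (cone A) = a"
  and ca_star_star: "cstar A (cstar A a) = a"
  and ca_star_add: "cstar A (cadd A a b) = cadd A (cstar A a) (cstar A b)"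
  and ca_star_sc: "cstar A (csc A s a) = csc A (cnj s) (cstar A a)"
  and ca_star_mul: "cstar A (cmul A a b) = cmul A (cstar A b) (cstar A a)"
  using assms unfolding cstar_algebra_def apply -
  apply ((elim conjE)?, metis)+
  done

lemma ca_cancel:
  assumes "cstar_algebra A" "cadd A a b = a" shows "b = czero A"
proof -
  have "b = cadd A b (cadd A a (csc A (-1) a))" using ca[OF assms(1)] by simp
  also have "\<dots> = cadd A (cadd A a b) (csc A (-1) a)" using ca[OF assms(1)] by metis
  also have "\<dots> = czero A" using assms ca[OF assms(1)] by simp
  finally show ?thesis .
qed

lemma ca_zero_add: "cstar_algebra A \<Longrightarrow> cadd A (czero A) a = a"
  using ca by metis

lemma ca_sc_0: "cstar_algebra A \<Longrightarrow> csc A 0 a = czero A"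
  by (rule ca_cancel[of A "csc A 0 a"], assumption, metis ca_sc_add_l add_0)

lemma ca_sc_zero: "cstar_algebra A \<Longrightarrow> csc A c (czero A) = czero A"
  by (rule ca_cancel[of A "csc A c (czero A)"], assumption, metis ca_sc_add_r ca_add_zero)

lemma ca_mul_zero_r: "cstar_algebra A \<Longrightarrow> cmul A a (czero A) = czero A"
  by (rule ca_cancel[of A "cmul A a (czero A)"], assumption, metis ca_distr_l ca_add_zero)

lemma ca_mul_zero_l: "cstar_algebra A \<Longrightarrow> cmul A (czero A) a = czero A"
  by (rule ca_cancel[of A "cmul A (czero A) a"], assumption, metis ca_distr_r ca_add_zero)

lemma ca_star_zero: "cstar_algebra A \<Longrightarrow> cstar A (czero A) = czero A"
  by (metis ca_sc_0 ca_star_sc complex_cnj_zero)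

lemma ca_star_one: "cstar_algebra A \<Longrightarrow> cstar A (cone A) = cone A"
  by (metis ca_one_r ca_star_mul ca_star_star)

lemma E_Nil[simp]: "eval_lin A X Y [] = czero A"
  by (simp add: eval_lin_def)

lemma E_Cons[simp]: "eval_lin A X Y ((c,w)#cs) = cadd A (csc A c (evalw A X Y w)) (eval_lin A X Y cs)"
  by (simp add: eval_lin_def)

lemma E_append: "cstar_algebra A \<Longrightarrow>
  eval_lin A X Y (cs @ ds) = cadd A (eval_lin A X Y cs) (eval_lin A X Y ds)"
  by (induction cs) (auto simp: ca_zero_add ca_add_assoc)

lemma E_scale: "cstar_algebra A \<Longrightarrow>
  eval_lin A X Y (map (\<lambda>(d,w). (c*d, w)) cs) = csc A c (eval_lin A X Y cs)"
  by (induction cs) (auto simp: ca_sc_zero ca_sc_add_r ca_sc_sc)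

lemma evalw_append: "cstar_algebra A \<Longrightarrow>
  evalw A X Y (u @ v) = cmul A (evalw A X Y u) (evalw A X Y v)"
  by (induction u) (auto simp: ca_one_l ca_mul_assoc)

lemma evalw_single: "cstar_algebra A \<Longrightarrow> evalw A X Y [l] = lett_val X Y l"
  by (simp add: ca_one_r)

lemma E_single: "cstar_algebra A \<Longrightarrow> eval_lin A X Y [(1, w)] = evalw A X Y w"
  by (simp add: ca_sc_one ca_add_zero)

lemma E_mulword: "cstar_algebra A \<Longrightarrow>
  cmul A (evalw A X Y v) (eval_lin A X Y ds) = eval_lin A X Y (map (\<lambda>(d,w). (d, v@w)) ds)"
  by (induction ds) (auto simp: ca_mul_zero_r ca_distr_l ca_sc_mul_r evalw_append)

lemma E_mul: "cstar_algebra A \<Longrightarrow>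
  cmul A (eval_lin A X Y cs) (eval_lin A X Y ds) =
   eval_lin A X Y (concat (map (\<lambda>(c,v). map (\<lambda>(d,w). (c*d, v@w)) ds) cs))"
proof (induction cs)
  case Nil thus ?case by (simp add: ca_mul_zero_l)
next
  case (Cons a cs)
  obtain c v where a: "a = (c,v)" by force
  have e: "eval_lin A X Y (map (\<lambda>(d,w). (c*d, v@w)) ds) = csc A c (eval_lin A X Y (map (\<lambda>(d,w). (d, v@w)) ds))"
    using Cons.prems by (induction ds) (auto simp: ca_sc_zero ca_sc_add_r ca_sc_sc)
  show ?case using Cons
    by (simp add: a ca_distr_r ca_sc_mul_l E_mulword E_append e)
qed

lemma star_evalw:
  assumes "cstar_algebra A" "\<forall>i<n. cstar A (X i) = X i" "\<forall>j<m. cstar A (Y j) = Y j"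
    "valid_word n m w"
  shows "cstar A (evalw A X Y w) = evalw A X Y (rev w)"
  using assms(4)
proof (induction w)
  case Nil thus ?case using assms(1) by (simp add: ca_star_one)
next
  case (Cons l w)
  have v: "valid_word n m w" "valid_lett n m l" using Cons.prems by (auto simp: valid_word_def)
  have sl: "cstar A (lett_val X Y l) = lett_val X Y l" using v(2) assms(2,3) by (cases l) auto
  show ?case using Cons.IH[OF v(1)] sl assms(1)
    by (simp add: ca_star_mul evalw_append evalw_single ca_one_r)
qed

lemma star_E:
  assumes "cstar_algebra A" "\<forall>i<n. cstar A (X i) = X i" "\<forall>j<m. cstar A (Y j) = Y j"
    "\<forall>(c,w)\<in>set cs. valid_word n m w"
  shows "cstar A (eval_lin A X Y cs) = eval_lin A X Y (map (\<lambda>(c,w). (cnj c, rev w)) cs)"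
  using assms(4)
proof (induction cs)
  case Nil thus ?case using assms(1) by (simp add: ca_star_zero)
next
  case (Cons a cs)
  obtain c v where a: "a = (c,v)" by force
  show ?case using Cons star_evalw[OF assms(1-3), of v] assms(1)
    by (auto simp: a ca_star_add ca_star_sc)
qed

lemma state:
  assumes "is_state A \<phi>"
  shows st_add: "\<phi> (cadd A a b) = \<phi> a + \<phi> b"
  and st_sc: "\<phi> (csc A s a) = s * \<phi> a"
  and st_one: "\<phi> (cone A) = 1"
  using assms unfolding is_state_def by blast+

lemma phi_E:
  assumes "cstar_algebra A" "is_state A \<phi>"
  shows "\<phi> (eval_lin A X Y cs) = (\<Sum>(c,w)\<leftarrow>cs. c * \<phi> (evalw A X Y w))"
proof (induction cs)
  case Nil
  have "\<phi> (czero A) = \<phi> (csc A 0 (czero A))" using ca_sc_0[OF assms(1)] by simp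
  thus ?case using st_sc[OF assms(2)] by simp
next
  case (Cons a cs) thus ?case using st_add[OF assms(2)] st_sc[OF assms(2)] by (cases a) auto
qed




lemma hi_assoc:
  assumes "hilbert H" shows "hadd H (hadd H x y) z = hadd H x (hadd H y z)"
  using assms[unfolded hilbert_def, THEN conjunct1] by blast

lemma hi_comm:
  assumes "hilbert H" shows "hadd H x y = hadd H y x"
  using assms[unfolded hilbert_def, THEN conjunct2, THEN conjunct1] by blast

lemma hi_zero:
  assumes "hilbert H" shows "hadd H x (hzero H) = x"
  using assms[unfolded hilbert_def, THEN conjunct2, THEN conjunct2, THEN conjunct1] by blast

lemma hi_neg:
  assumes "hilbert H" shows "hadd H x (hsc H (-1) x) = hzero H"
  using assms[unfolded hilbert_def, THEN conjunct2, THEN conjunct2, THEN conjunct2, THEN conjunct1] by blast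

lemma hi_sc_one:
  assumes "hilbert H" shows "hsc H 1 x = x"
  using assms[unfolded hilbert_def, THEN conjunct2, THEN conjunct2, THEN conjunct2, THEN conjunct2, THEN conjunct1] by blast

lemma hi_sc_sc:
  assumes "hilbert H" shows "hsc H s (hsc H t x) = hsc H (s*t) x"
  using assms[unfolded hilbert_def, THEN conjunct2, THEN conjunct2, THEN conjunct2, THEN conjunct2, THEN conjunct2, THEN conjunct1] by blast

lemma hi_sc_add_l:
  assumes "hilbert H" shows "hsc H (s+t) x = hadd H (hsc H s x) (hsc H t x)"
  using assms[unfolded hilbert_def, THEN conjunct2, THEN conjunct2, THEN conjunct2, THEN conjunct2, THEN conjunct2, THEN conjunct2, THEN conjunct1] by blast

lemma hi_sc_add_r:
  assumes "hilbert H" shows "hsc H s (hadd H x y) = hadd H (hsc H s x) (hsc H s y)"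
  using assms[unfolded hilbert_def, THEN conjunct2, THEN conjunct2, THEN conjunct2, THEN conjunct2, THEN conjunct2, THEN conjunct2, THEN conjunct2, THEN conjunct1] by blast

lemma hi_ip_add:
  assumes "hilbert H" shows "hinner H (hadd H x y) z = hinner H x z + hinner H y z"
  using assms[unfolded hilbert_def, THEN conjunct2, THEN conjunct2, THEN conjunct2, THEN conjunct2, THEN conjunct2, THEN conjunct2, THEN conjunct2, THEN conjunct2, THEN conjunct1] by blast

lemma hi_ip_sc:
  assumes "hilbert H" shows "hinner H (hsc H s x) y = s * hinner H x y"
  using assms[unfolded hilbert_def, THEN conjunct2, THEN conjunct2, THEN conjunct2, THEN conjunct2, THEN conjunct2, THEN conjunct2, THEN conjunct2, THEN conjunct2, THEN conjunct2, THEN conjunct1] by blast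

lemma hi_ip_cnj:
  assumes "hilbert H" shows "hinner H x y = cnj (hinner H y x)"
  using assms[unfolded hilbert_def, THEN conjunct2, THEN conjunct2, THEN conjunct2, THEN conjunct2, THEN conjunct2, THEN conjunct2, THEN conjunct2, THEN conjunct2, THEN conjunct2, THEN conjunct2, THEN conjunct1] by blast

lemma hi_ip_imre:
  assumes "hilbert H" shows "Im (hinner H x x) = 0 \<and> 0 \<le> Re (hinner H x x)"
  using assms[unfolded hilbert_def, THEN conjunct2, THEN conjunct2, THEN conjunct2, THEN conjunct2, THEN conjunct2, THEN conjunct2, THEN conjunct2, THEN conjunct2, THEN conjunct2, THEN conjunct2, THEN conjunct2, THEN conjunct1] by blast

lemma hi_ip_def:
  assumes "hilbert H" shows "hinner H x x = 0 \<Longrightarrow> x = hzero H"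
  using assms[unfolded hilbert_def, THEN conjunct2, THEN conjunct2, THEN conjunct2, THEN conjunct2, THEN conjunct2, THEN conjunct2, THEN conjunct2, THEN conjunct2, THEN conjunct2, THEN conjunct2, THEN conjunct2, THEN conjunct2, THEN conjunct1] by blast

lemma hi_complete:
  fixes f :: "nat \<Rightarrow> 'h"
  assumes "hilbert H" "\<forall>e>0. \<exists>N. \<forall>k\<ge>N. \<forall>l\<ge>N. hnorm H (hsub H (f k) (f l)) < e"
  shows "\<exists>x. \<forall>e>0. \<exists>N. \<forall>k\<ge>N. hnorm H (hsub H (f k) x) < e"
  using assms(1)[unfolded hilbert_def, THEN conjunct2, THEN conjunct2, THEN conjunct2, THEN conjunct2, THEN conjunct2, THEN conjunct2, THEN conjunct2, THEN conjunct2, THEN conjunct2, THEN conjunct2, THEN conjunct2, THEN conjunct2, THEN conjunct2, THEN spec[of _ f]] assms(2) by blast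

lemma hi_ip_im: "hilbert H \<Longrightarrow> Im (hinner H x x) = 0" using hi_ip_imre[of H x] by blast
lemma hi_ip_re: "hilbert H \<Longrightarrow> 0 \<le> Re (hinner H x x)" using hi_ip_imre[of H x] by blast
lemmas hi = hi_assoc hi_comm hi_zero hi_neg hi_sc_one hi_sc_sc hi_sc_add_l hi_sc_add_r hi_ip_add hi_ip_sc hi_ip_im hi_ip_re

lemma hi_lc: assumes "hilbert H" shows "hadd H x (hadd H y z) = hadd H y (hadd H x z)"
  using hi_assoc[OF assms, of x y z] hi_assoc[OF assms, of y x z] hi_comm[OF assms, of x y] by simp

lemma hi_cancel: assumes H: "hilbert H" and "hadd H a b = a" shows "b = hzero H"
proof -
  have "b = hadd H b (hadd H a (hsc H (-1) a))" using H by (simp add: hi_neg hi_zero)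
  also have "\<dots> = hadd H (hadd H a b) (hsc H (-1) a)"
    using hi_assoc[OF H, of b a "hsc H (-1) a"] hi_comm[OF H, of a b] by simp
  also have "\<dots> = hzero H" using assms by (simp add: hi_neg)
  finally show ?thesis .
qed

lemma hi_zero_add: assumes H: "hilbert H" shows "hadd H (hzero H) a = a"
  using hi_comm[OF H, of "hzero H" a] hi_zero[OF H, of a] by simp

lemma hi_sc_0: assumes H: "hilbert H" shows "hsc H 0 a = hzero H"
  by (rule hi_cancel[OF H, of "hsc H 0 a"]) (simp add: hi_sc_add_l[OF H, symmetric])

lemma hi_sc_zero: assumes H: "hilbert H" shows "hsc H c (hzero H) = hzero H"
  by (rule hi_cancel[OF H, of "hsc H c (hzero H)"]) (simp add: hi_sc_add_r[OF H, symmetric] hi_zero[OF H])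

lemma hi_ip_zero_l: assumes H: "hilbert H" shows "hinner H (hzero H) y = 0"
  using hi_ip_sc[OF H, of 0 "hzero H" y] by (simp add: hi_sc_zero[OF H])

lemma hi_ip_zero_r: assumes H: "hilbert H" shows "hinner H y (hzero H) = 0"
  using hi_ip_cnj[OF H, of y "hzero H"] by (simp add: hi_ip_zero_l[OF H])

lemma hi_ip_add_r: assumes H: "hilbert H" shows "hinner H z (hadd H x y) = hinner H z x + hinner H z y"
  using hi_ip_cnj[OF H, of z "hadd H x y"] hi_ip_cnj[OF H, of z x] hi_ip_cnj[OF H, of z y]
  by (simp add: hi_ip_add[OF H])

lemma hi_ip_sc_r: assumes H: "hilbert H" shows "hinner H y (hsc H s x) = cnj s * hinner H y x"
  using hi_ip_cnj[OF H, of y "hsc H s x"] hi_ip_cnj[OF H, of y x]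
  by (simp add: hi_ip_sc[OF H])

lemma hi_ip_sub_l: "hilbert H \<Longrightarrow> hinner H (hsub H x y) z = hinner H x z - hinner H y z"
  by (simp add: hsub_def hi_ip_add hi_ip_sc)

lemma hi_ip_sub_r: "hilbert H \<Longrightarrow> hinner H z (hsub H x y) = hinner H z x - hinner H z y"
  by (simp add: hsub_def hi_ip_add_r hi_ip_sc_r)

lemma hnorm_nonneg: assumes "hilbert H" shows "hnorm H x \<ge> 0"
  using hi_ip_re[OF assms, of x] by (simp add: hnorm_def)

lemma hnorm_sq: assumes "hilbert H" shows "(hnorm H x)^2 = Re (hinner H x x)"
  using hi_ip_re[OF assms, of x] by (simp add: hnorm_def)

lemma hi_ip_self: "hilbert H \<Longrightarrow> hinner H x x = complex_of_real ((hnorm H x)^2)"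
  by (simp add: hnorm_sq complex_eq_iff hi_ip_im)

lemma hnorm_zero: assumes H: "hilbert H" shows "hnorm H x = 0 \<Longrightarrow> x = hzero H"
  using hi_ip_self[OF H, of x] hi_ip_def[OF H, of x] by simp

lemma hnorm_hzero: "hilbert H \<Longrightarrow> hnorm H (hzero H) = 0"
  by (simp add: hnorm_def hi_ip_zero_l)

lemma hnorm_sc: assumes "hilbert H" shows "hnorm H (hsc H s x) = cmod s * hnorm H x"
proof -
  have "hinner H (hsc H s x) (hsc H s x) = (s * cnj s) * hinner H x x"
    using assms by (simp add: hi_ip_sc hi_ip_sc_r)
  also have "s * cnj s = complex_of_real ((cmod s)^2)" by (rule complex_norm_square[symmetric])
  finally have "Re (hinner H (hsc H s x) (hsc H s x)) = (cmod s)^2 * Re (hinner H x x)"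
    by simp
  thus ?thesis by (simp add: hnorm_def real_sqrt_mult)
qed

lemma hi_sub_self: "hilbert H \<Longrightarrow> hsub H x x = hzero H"
  by (simp add: hsub_def hi_neg)

lemma hi_sub_eq: assumes "hilbert H" "hsub H x y = hzero H" shows "x = y"
proof -
  have "x = hadd H x (hadd H y (hsc H (-1) y))" using assms(1) by (simp add: hi_neg hi_zero)
  also have "\<dots> = hadd H (hsub H x y) y" using assms(1)
    by (simp add: hsub_def hi_assoc hi_comm[OF assms(1), of y "hsc H (-1) y"])
  also have "\<dots> = y" using assms by (simp add: hi_zero_add)
  finally show ?thesis .
qed

lemma hi_sub_swap: assumes H: "hilbert H" shows "hsub H y x = hsc H (-1) (hsub H x y)"
  unfolding hsub_def hi_sc_add_r[OF H] hi_sc_sc[OF H] by (simp add: hi_sc_one[OF H] hi_comm[OF H, of y])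

lemma hnorm_sub_sym: assumes H: "hilbert H" shows "hnorm H (hsub H y x) = hnorm H (hsub H x y)"
  unfolding hi_sub_swap[OF H, of y x] hnorm_sc[OF H] by simp

lemma hnorm_zero_iff: "hilbert H \<Longrightarrow> hnorm H x = 0 \<longleftrightarrow> x = hzero H"
  using hnorm_zero[of H x] hnorm_hzero[of H] by blast

lemma cauchy_schwarz:
  assumes H: "hilbert H"
  shows "cmod (hinner H x y) \<le> hnorm H x * hnorm H y"
proof (cases "y = hzero H")
  case True thus ?thesis using H by (simp add: hi_ip_zero_r hnorm_hzero)
next
  case False
  define a where "a = (hnorm H x)^2"
  define b where "b = (hnorm H y)^2"
  define c where "c = hinner H x y"
  have "hnorm H y \<noteq> 0" using False hnorm_zero[OF H, of y] by blast
  hence b0: "b > 0" using hnorm_nonneg[OF H, of y] unfolding b_def by simp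
  define s where "s = - c / complex_of_real b"
  define u where "u = hadd H x (hsc H s y)"
  have "hinner H u u = hinner H x x + cnj s * hinner H x y + s * hinner H y x + s * cnj s * hinner H y y"
    unfolding u_def hi_ip_add[OF H] hi_ip_add_r[OF H] hi_ip_sc[OF H] hi_ip_sc_r[OF H]
    by (simp add: algebra_simps)
  also have "\<dots> = of_real a + cnj s * c + s * cnj c + s * cnj s * of_real b"
    unfolding a_def b_def c_def hi_ip_self[OF H] hi_ip_cnj[OF H, of y x] by simp
  also have "\<dots> = of_real (a - (cmod c)^2 / b)"
  proof -
    have bb: "complex_of_real b \<noteq> 0" using b0 by simp
    have k: "c * cnj c = of_real ((cmod c)^2)" by (rule complex_norm_square[symmetric])
    have cs: "cnj s = - cnj c / of_real b" by (simp add: s_def)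
    have t1: "cnj s * c = - of_real ((cmod c)^2 / b)" unfolding cs using k
      by (simp add: mult.commute)
    have t2: "s * cnj c = - of_real ((cmod c)^2 / b)" unfolding s_def using k
      by simp
    have t3: "s * cnj s * of_real b = of_real ((cmod c)^2 / b)" unfolding cs s_def using k bb
      by (simp add: power2_eq_square)
    show ?thesis unfolding t1 t2 t3 by simp
  qed
  finally have "0 \<le> a - (cmod c)^2 / b" using hi_ip_re[OF H, of u] by simp
  hence "(cmod c)^2 \<le> a * b" using b0 by (simp add: field_simps)
  also have "a * b = (hnorm H x * hnorm H y)^2" by (simp add: a_def b_def power_mult_distrib)
  finally show ?thesis unfolding c_def
    by (rule power2_le_imp_le) (simp add: hnorm_nonneg[OF H])
qed

lemma hnorm_triangle:
  assumes H: "hilbert H"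
  shows "hnorm H (hadd H x y) \<le> hnorm H x + hnorm H y"
proof -
  have "hinner H (hadd H x y) (hadd H x y) = hinner H x x + hinner H x y + cnj (hinner H x y) + hinner H y y"
    using H by (simp add: hi_ip_add hi_ip_add_r hi_ip_cnj[of H y x])
  hence "(hnorm H (hadd H x y))^2 = (hnorm H x)^2 + 2 * Re (hinner H x y) + (hnorm H y)^2"
    using H by (simp add: hnorm_sq)
  also have "\<dots> \<le> (hnorm H x)^2 + 2 * (hnorm H x * hnorm H y) + (hnorm H y)^2"
    using cauchy_schwarz[OF H, of x y] complex_Re_le_cmod[of "hinner H x y"] by linarith
  also have "\<dots> = (hnorm H x + hnorm H y)^2" by (simp add: power2_sum)
  finally show ?thesis by (rule power2_le_imp_le) (simp add: add_nonneg_nonneg hnorm_nonneg[OF H])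
qed

lemma hi_sub_chain: assumes H: "hilbert H" shows "hadd H (hsub H x y) (hsub H y z) = hsub H x z"
proof -
  have 1: "hadd H (hsub H x y) (hsub H y z) = hadd H x (hadd H (hsc H (-1) y) (hadd H y (hsc H (-1) z)))"
    unfolding hsub_def by (rule hi_assoc[OF H])
  have 2: "hadd H (hsc H (-1) y) (hadd H y (hsc H (-1) z)) = hadd H (hadd H (hsc H (-1) y) y) (hsc H (-1) z)"
    by (rule hi_assoc[OF H, symmetric])
  have 3: "hadd H (hsc H (-1) y) y = hzero H"
    using hi_comm[OF H, of "hsc H (-1) y" y] hi_neg[OF H, of y] by simp
  show ?thesis unfolding 1 unfolding 2 3 hi_zero_add[OF H] unfolding hsub_def ..
qed

lemma hnorm_tri_sub: assumes H: "hilbert H" shows "hnorm H (hsub H x z) \<le> hnorm H (hsub H x y) + hnorm H (hsub H y z)"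
  using hnorm_triangle[OF H, of "hsub H x y" "hsub H y z"] hi_sub_chain[OF H] by simp

lemma hi_sub_add4: assumes H: "hilbert H" shows "hsub H (hadd H x y) (hadd H a b) = hadd H (hsub H x a) (hsub H y b)"
  unfolding hsub_def by (simp add: hi_sc_add_r[OF H] hi_assoc[OF H] hi_lc[OF H, of y "hsc H (-1) a"])

lemma hnorm_sub_add4: assumes H: "hilbert H" shows "hnorm H (hsub H (hadd H x y) (hadd H a b)) \<le> hnorm H (hsub H x a) + hnorm H (hsub H y b)"
  by (simp add: hi_sub_add4[OF H] hnorm_triangle[OF H])

lemma hi_sub_sc: assumes H: "hilbert H" shows "hsub H (hsc H s x) (hsc H s a) = hsc H s (hsub H x a)"
  unfolding hsub_def by (simp add: hi_sc_add_r[OF H] hi_sc_sc[OF H] mult.commute)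

lemma hi_sub_add_cancel: assumes "hilbert H" shows "hadd H (hsub H x y) y = x"
  unfolding hsub_def using assms by (simp add: hi_assoc hi_comm[OF assms, of "hsc H (-1) y" y] hi_neg hi_zero)

lemma hnorm_rev_tri: assumes "hilbert H" shows "\<bar>hnorm H x - hnorm H y\<bar> \<le> hnorm H (hsub H x y)"
proof -
  have 1: "hnorm H x \<le> hnorm H (hsub H x y) + hnorm H y"
    using hnorm_triangle[OF assms, of "hsub H x y" y] hi_sub_add_cancel[OF assms] by simp
  have 2: "hnorm H y \<le> hnorm H (hsub H y x) + hnorm H x"
    using hnorm_triangle[OF assms, of "hsub H y x" x] hi_sub_add_cancel[OF assms] by simp
  show ?thesis using 1 2 hnorm_sub_sym[OF assms, of x y] by linarith
qed

lemma ip_cont_l: assumes "hilbert H"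
  shows "cmod (hinner H x z - hinner H y z) \<le> hnorm H (hsub H x y) * hnorm H z"
  using cauchy_schwarz[OF assms, of "hsub H x y" z] by (simp add: hi_ip_sub_l[OF assms])

lemma ip_cont_r: assumes "hilbert H"
  shows "cmod (hinner H z x - hinner H z y) \<le> hnorm H z * hnorm H (hsub H x y)"
  using cauchy_schwarz[OF assms, of z "hsub H x y"] by (simp add: hi_ip_sub_r[OF assms])




definition prime :: "lett list \<Rightarrow> lett list" where
  "prime w = filter isLX w @ rev (filter isLY w)"

fun idx :: "lett \<Rightarrow> nat" where "idx (LX i) = i" | "idx (LY j) = j"

lemma map_LX_idx: "\<forall>l\<in>set u. isLX l \<Longrightarrow> map LX (map idx u) = u"
proof (induction u)
  case (Cons l u) thus ?case by (cases l) auto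
qed simp

lemma map_LY_idx: "\<forall>l\<in>set u. isLY l \<Longrightarrow> map LY (map idx u) = u"
proof (induction u)
  case (Cons l u) thus ?case by (cases l) auto
qed simp

lemma valid_word_append[simp]: "valid_word n m (u @ v) \<longleftrightarrow> valid_word n m u \<and> valid_word n m v"
  by (auto simp: valid_word_def)
lemma valid_word_rev[simp]: "valid_word n m (rev u) \<longleftrightarrow> valid_word n m u"
  by (auto simp: valid_word_def)
lemma valid_word_filter: "valid_word n m u \<Longrightarrow> valid_word n m (filter P u)"
  by (auto simp: valid_word_def)
lemma valid_word_take: "valid_word n m u \<Longrightarrow> valid_word n m (take k u)"
  by (auto simp: valid_word_def dest: in_set_takeD)
lemma valid_word_drop: "valid_word n m u \<Longrightarrow> valid_word n m (drop k u)"
  by (auto simp: valid_word_def dest: in_set_dropD)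
lemma valid_word_prime: "valid_word n m u \<Longrightarrow> valid_word n m (prime u)"
  by (auto simp: valid_word_def prime_def)
lemma valid_word_Nil[simp]: "valid_word n m []"
  by (simp add: valid_word_def)

lemma rev_filter': "filter P (rev xs) = rev (filter P xs)"
  by (simp add: rev_filter)

lemma isLY_not: "isLY l \<longleftrightarrow> \<not> isLX l"
  by (cases l) auto

lemma filter_isLX_isLY[simp]: "filter isLY (filter isLX u) = []" "filter isLX (filter isLY u) = []"
  by (simp_all add: filter_filter isLY_not)
lemma filter_isLX_isLX[simp]: "filter isLX (filter isLX u) = filter isLX u" "filter isLY (filter isLY u) = filter isLY u"
  by (simp_all add: filter_filter)

lemma sum_positions_Cons:
  "(\<Sum>q\<in>{q. q < length (l # w) \<and> (l # w) ! q = c}. g q) =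
   (if l = c then g 0 else 0) + (\<Sum>q\<in>{q. q < length w \<and> w ! q = c}. g (Suc q))"
proof -
  have S: "{q. q < length (l # w) \<and> (l # w) ! q = c} =
     (if l = c then {0} else {}) \<union> Suc ` {q. q < length w \<and> w ! q = c}"
  proof (rule set_eqI)
    fix x show "x \<in> {q. q < length (l # w) \<and> (l # w) ! q = c} \<longleftrightarrow>
      x \<in> (if l = c then {0} else {}) \<union> Suc ` {q. q < length w \<and> w ! q = c}"
      by (cases x) auto
  qed
  have "(\<Sum>q\<in>Suc ` {q. q < length w \<and> w ! q = c}. g q) = (\<Sum>q\<in>{q. q < length w \<and> w ! q = c}. g (Suc q))"
    by (subst sum.reindex) auto
  thus ?thesis unfolding S by (auto simp: sum.union_disjoint)
qed

lemma sum_positions_filterX: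
  "(\<Sum>q\<in>{q. q < length w \<and> w ! q = LX i}. G (filter isLX (take q w)) (filter isLX (drop (Suc q) w))) =
   (\<Sum>k\<in>{k. k < length (filter isLX w) \<and> filter isLX w ! k = LX i}.
       G (take k (filter isLX w)) (drop (Suc k) (filter isLX w)))"
proof (induction w arbitrary: G)
  case Nil thus ?case by simp
next
  case (Cons l w)
  show ?case
  proof (cases l)
    case (LX a)
    have "(\<Sum>q\<in>{q. q < length (l # w) \<and> (l # w) ! q = LX i}. G (filter isLX (take q (l # w))) (filter isLX (drop (Suc q) (l # w))))
       = (if l = LX i then G [] (filter isLX w) else 0) +
         (\<Sum>q\<in>{q. q < length w \<and> w ! q = LX i}. G (LX a # filter isLX (take q w)) (filter isLX (drop (Suc q) w)))"
      by (subst sum_positions_Cons) (simp add: LX)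
    also have "\<dots> = (if l = LX i then G [] (filter isLX w) else 0) +
       (\<Sum>k\<in>{k. k < length (filter isLX w) \<and> filter isLX w ! k = LX i}.
         G (LX a # take k (filter isLX w)) (drop (Suc k) (filter isLX w)))"
      using Cons.IH[of "\<lambda>p s. G (LX a # p) s"] by simp
    also have "\<dots> = (\<Sum>k\<in>{k. k < length (filter isLX (l # w)) \<and> filter isLX (l # w) ! k = LX i}.
       G (take k (filter isLX (l # w))) (drop (Suc k) (filter isLX (l # w))))"
      unfolding LX filter.simps isLX.simps if_True by (subst sum_positions_Cons) simp
    finally show ?thesis .
  next
    case (LY b)
    have "(\<Sum>q\<in>{q. q < length (l # w) \<and> (l # w) ! q = LX i}. G (filter isLX (take q (l # w))) (filter isLX (drop (Suc q) (l # w))))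
       = (\<Sum>q\<in>{q. q < length w \<and> w ! q = LX i}. G (filter isLX (take q w)) (filter isLX (drop (Suc q) w)))"
      by (subst sum_positions_Cons) (simp add: LY)
    thus ?thesis using Cons.IH[of G] by (simp add: LY)
  qed
qed

lemma sum_positions_prefix:
  assumes "\<forall>l\<in>set p. l \<noteq> LX i"
  shows "(\<Sum>q\<in>{q. q < length (p @ u) \<and> (p @ u) ! q = LX i}. F (take q (p @ u)) (drop (Suc q) (p @ u))) =
   (\<Sum>k\<in>{k. k < length u \<and> u ! k = LX i}. F (p @ take k u) (drop (Suc k) u))"
  using assms
proof (induction p arbitrary: F)
  case Nil thus ?case by simp
next
  case (Cons l p)
  have "(\<Sum>q\<in>{q. q < length ((l # p) @ u) \<and> ((l # p) @ u) ! q = LX i}. F (take q ((l # p) @ u)) (drop (Suc q) ((l # p) @ u)))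
     = (\<Sum>q\<in>{q. q < length (p @ u) \<and> (p @ u) ! q = LX i}. F (l # take q (p @ u)) (drop (Suc q) (p @ u)))"
    using Cons.prems unfolding append_Cons by (subst sum_positions_Cons) simp
  also have "\<dots> = (\<Sum>k\<in>{k. k < length u \<and> u ! k = LX i}. F (l # p @ take k u) (drop (Suc k) u))"
    using Cons.IH[of "\<lambda>a b. F (l # a) b"] Cons.prems by simp
  finally show ?case by simp
qed


lemma gns_ax:
  assumes "gns A \<phi> H \<iota> \<pi>"
  shows gns_hilbert: "hilbert H"
  and gns_add: "\<iota> (cadd A a b) = hadd H (\<iota> a) (\<iota> b)"
  and gns_sc: "\<iota> (csc A s a) = hsc H s (\<iota> a)"
  and gns_ip: "hinner H (\<iota> a) (\<iota> b) = \<phi> (cmul A (cstar A b) a)"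
  and gns_dense: "hclosure H (range \<iota>) = UNIV"
  and gns_pi: "\<pi> a (\<iota> b) = \<iota> (cmul A a b)"
  and gns_pi_add: "\<pi> a (hadd H x y) = hadd H (\<pi> a x) (\<pi> a y)"
  and gns_pi_sc: "\<pi> a (hsc H s x) = hsc H s (\<pi> a x)"
  and gns_pi_bdd: "\<exists>C. \<forall>x. hnorm H (\<pi> a x) \<le> C * hnorm H x"
  using assms unfolding gns_def by blast+


lemma sum_list_concat': "sum_list (concat xss) = sum_list (map sum_list (xss :: 'x::monoid_add list list))"
  by (induction xss) (auto simp: sum_list_append)

definition vcs :: "nat \<Rightarrow> nat \<Rightarrow> (complex \<times> lett list) list \<Rightarrow> bool" where
  "vcs n m cs \<longleftrightarrow> (\<forall>(c,w)\<in>set cs. valid_word n m w)"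

definition pr :: "(complex \<times> lett list) list \<Rightarrow> (complex \<times> lett list) list" where
  "pr cs = map (\<lambda>(c,w). (c, prime w)) cs"

definition neg :: "(complex \<times> lett list) list \<Rightarrow> (complex \<times> lett list) list" where
  "neg cs = map (\<lambda>(d,w). ((-1)*d, w)) cs"

definition scl :: "complex \<Rightarrow> (complex \<times> lett list) list \<Rightarrow> (complex \<times> lett list) list" where
  "scl s cs = map (\<lambda>(d,w). (s*d, w)) cs"

lemma vcs_append[simp]: "vcs n m (cs @ ds) \<longleftrightarrow> vcs n m cs \<and> vcs n m ds"
  by (auto simp: vcs_def)
lemma vcs_neg[simp]: "vcs n m (neg cs) \<longleftrightarrow> vcs n m cs"
  by (auto simp: vcs_def neg_def)
lemma vcs_scl[simp]: "vcs n m (scl s cs) \<longleftrightarrow> vcs n m cs"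
  by (auto simp: vcs_def scl_def)
lemma vcs_single[simp]: "vcs n m [(c, w)] \<longleftrightarrow> valid_word n m w"
  by (auto simp: vcs_def)
lemma pr_append[simp]: "pr (cs @ ds) = pr cs @ pr ds" by (simp add: pr_def)
lemma pr_neg[simp]: "pr (neg cs) = neg (pr cs)" by (induction cs) (auto simp: pr_def neg_def)
lemma pr_scl[simp]: "pr (scl s cs) = scl s (pr cs)" by (induction cs) (auto simp: pr_def scl_def)
lemma pr_single[simp]: "pr [(c, w)] = [(c, prime w)]" by (simp add: pr_def)
lemma vcs_pr: "vcs n m cs \<Longrightarrow> vcs n m (pr cs)"
  by (auto simp: vcs_def pr_def valid_word_prime)

lemma ip_E:
  assumes CA: "cstar_algebra A" and ST: "is_state A \<phi>" and G: "gns A \<phi> H \<iota> \<pi>"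
    and sX: "\<forall>i<n. cstar A (X i) = X i" and sY: "\<forall>j<m. cstar A (Y j) = Y j"
    and vd: "vcs n m ds"
  shows "hinner H (\<iota> (eval_lin A X Y cs)) (\<iota> (eval_lin A X Y ds)) =
    (\<Sum>(d,v)\<leftarrow>ds. \<Sum>(c,w)\<leftarrow>cs. (cnj d * c) * \<phi> (evalw A X Y (rev v @ w)))"
proof -
  have "hinner H (\<iota> (eval_lin A X Y cs)) (\<iota> (eval_lin A X Y ds)) =
     \<phi> (cmul A (eval_lin A X Y (map (\<lambda>(c,w). (cnj c, rev w)) ds)) (eval_lin A X Y cs))"
    using gns_ip[OF G] star_E[OF CA sX sY, of ds] vd by (simp add: vcs_def)
  also have "\<dots> = (\<Sum>(d,v)\<leftarrow>ds. \<Sum>(c,w)\<leftarrow>cs. (cnj d * c) * \<phi> (evalw A X Y (rev v @ w)))"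
    unfolding E_mul[OF CA] phi_E[OF CA ST]
    by (simp add: map_concat sum_list_concat' o_def split_def)
  finally show ?thesis .
qed

lemma iota_zero: assumes CA: "cstar_algebra A" and G: "gns A \<phi> H \<iota> \<pi>"
  shows "\<iota> (czero A) = hzero H"
proof -
  have "\<iota> (czero A) = \<iota> (csc A 0 (czero A))" using ca_sc_0[OF CA] by simp
  also have "\<dots> = hzero H" using gns_sc[OF G] hi_sc_0[OF gns_hilbert[OF G]] by simp
  finally show ?thesis .
qed

lemma iota_E_sub: assumes CA: "cstar_algebra A" and G: "gns A \<phi> H \<iota> \<pi>"
  shows "hsub H (\<iota> (eval_lin A X Y cs)) (\<iota> (eval_lin A X Y ds)) = \<iota> (eval_lin A X Y (cs @ neg ds))"
  unfolding hsub_def neg_def E_append[OF CA] E_scale[OF CA] gns_add[OF G] gns_sc[OF G] ..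

lemma ip_E_r: assumes CA: "cstar_algebra A" and G: "gns A \<phi> H \<iota> \<pi>"
  shows "hinner H x (\<iota> (eval_lin A X Y cs)) = (\<Sum>(c,w)\<leftarrow>cs. cnj c * hinner H x (\<iota> (evalw A X Y w)))"
proof (induction cs)
  case Nil thus ?case using iota_zero[OF CA G] hi_ip_zero_r[OF gns_hilbert[OF G]] by simp
next
  case (Cons a cs) thus ?case
    using gns_add[OF G] gns_sc[OF G] hi_ip_add_r[OF gns_hilbert[OF G]] hi_ip_sc_r[OF gns_hilbert[OF G]]
    by (cases a) simp
qed

lemma B_repr: assumes CA: "cstar_algebra A" and b: "b \<in> alg_gen A (X ` {..<n} \<union> Y ` {..<m})"
  shows "\<exists>cs. vcs n m cs \<and> b = eval_lin A X Y cs"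
  using b
proof (induction rule: alg_gen.induct)
  case one thus ?case using E_single[OF CA, of X Y "[]"] by (intro exI[of _ "[(1,[])]"]) simp
next
  case (gen s)
  then obtain l where l: "valid_lett n m l" "s = lett_val X Y l"
    by (auto, metis lett_val.simps(1) valid_lett.simps(1), metis lett_val.simps(2) valid_lett.simps(2))
  thus ?case using E_single[OF CA, of X Y "[l]"] evalw_single[OF CA]
    by (intro exI[of _ "[(1,[l])]"]) (simp add: valid_word_def)
next
  case (add a b)
  then obtain cs ds where "vcs n m cs" "a = eval_lin A X Y cs" "vcs n m ds" "b = eval_lin A X Y ds" by blast
  thus ?case using E_append[OF CA] by (intro exI[of _ "cs @ ds"]) simp
next
  case (mul a b)
  then obtain cs ds where h: "vcs n m cs" "a = eval_lin A X Y cs" "vcs n m ds" "b = eval_lin A X Y ds" by blast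
  have "vcs n m (concat (map (\<lambda>(c,v). map (\<lambda>(d,w). (c*d, v@w)) ds) cs))"
    using h(1,3) by (fastforce simp: vcs_def)
  thus ?case using E_mul[OF CA] h by blast
next
  case (sc a c)
  then obtain cs where h: "vcs n m cs" "a = eval_lin A X Y cs" by blast
  have "eval_lin A X Y (scl c cs) = csc A c (eval_lin A X Y cs)" unfolding scl_def by (rule E_scale[OF CA])
  thus ?case using h by (intro exI[of _ "scl c cs"]) simp
qed

lemma evalw_in_B: assumes "valid_word n m w"
  shows "evalw A X Y w \<in> alg_gen A (X ` {..<n} \<union> Y ` {..<m})"
  using assms
proof (induction w)
  case Nil thus ?case by (simp add: alg_gen.one)
next
  case (Cons l w)
  have "lett_val X Y l \<in> alg_gen A (X ` {..<n} \<union> Y ` {..<m})"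
    using Cons.prems by (cases l) (auto simp: valid_word_def intro: alg_gen.gen)
  thus ?case using Cons by (simp add: valid_word_def alg_gen.mul)
qed

lemma small_le: assumes "\<And>e. e > 0 \<Longrightarrow> (d::real) \<le> C * e" "C \<ge> 0" shows "d \<le> 0"
proof (rule ccontr)
  assume "\<not> d \<le> 0"
  hence d: "d > 0" by simp
  have "d \<le> C * (d / (2 * C + 1))" using assms(1)[of "d / (2 * C + 1)"] d assms(2) by simp
  also have "\<dots> < d" using d assms(2) by (simp add: field_simps add_pos_nonneg mult_nonneg_nonneg)
  finally show False by simp
qed


lemma scale_lt: assumes "0 \<le> (c::real)" "0 < e" "h < e / (c + 1)" "0 \<le> h" shows "c * h < e"
proof -
  have "c * h \<le> c * (e / (c + 1))" by (rule mult_left_mono) (use assms in auto)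
  also have "\<dots> < e" using assms by (simp add: field_simps)
  finally show ?thesis .
qed

lemma adjoint:
  assumes CA: "cstar_algebra A" and G: "gns A \<phi> H \<iota> \<pi>"
  shows "hinner H (\<pi> a x) (\<iota> b) = hinner H x (\<iota> (cmul A (cstar A a) b))"
proof -
  have HH: "hilbert H" using gns_hilbert[OF G] .
  obtain C0 where C0: "\<forall>x. hnorm H (\<pi> a x) \<le> C0 * hnorm H x" using gns_pi_bdd[OF G] by blast
  define z where "z = \<iota> (cmul A (cstar A a) b)"
  define C where "C = max C0 0 * hnorm H (\<iota> b) + hnorm H z"
  have C: "C \<ge> 0" unfolding C_def using hnorm_nonneg[OF HH] by simp
  have xin: "x \<in> hclosure H (range \<iota>)" using gns_dense[OF G] by simp
  have "cmod (hinner H (\<pi> a x) (\<iota> b) - hinner H x z) \<le> 0"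
  proof (rule small_le[OF _ C])
    fix e :: real assume e: "e > 0"
    then obtain c where c: "hnorm H (hsub H x (\<iota> c)) < e" using xin unfolding hclosure_def by auto
    have eq: "hinner H (\<pi> a (\<iota> c)) (\<iota> b) = hinner H (\<iota> c) z"
      unfolding z_def gns_pi[OF G] gns_ip[OF G] ca_star_mul[OF CA] ca_star_star[OF CA] ca_mul_assoc[OF CA] ..
    have sub: "hsub H (\<pi> a x) (\<pi> a (\<iota> c)) = \<pi> a (hsub H x (\<iota> c))"
      unfolding hsub_def gns_pi_add[OF G] gns_pi_sc[OF G] ..
    have n1: "hnorm H (\<pi> a (hsub H x (\<iota> c))) \<le> max C0 0 * e"
    proof -
      have "hnorm H (\<pi> a (hsub H x (\<iota> c))) \<le> C0 * hnorm H (hsub H x (\<iota> c))" using C0 by blast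
      also have "\<dots> \<le> max C0 0 * hnorm H (hsub H x (\<iota> c))"
        using hnorm_nonneg[OF HH] by (simp add: mult_right_mono)
      also have "\<dots> \<le> max C0 0 * e" using c by (simp add: mult_left_mono)
      finally show ?thesis .
    qed
    have t1: "cmod (hinner H (\<pi> a x) (\<iota> b) - hinner H (\<pi> a (\<iota> c)) (\<iota> b)) \<le> max C0 0 * e * hnorm H (\<iota> b)"
      using ip_cont_l[OF HH, of "\<pi> a x" "\<iota> b" "\<pi> a (\<iota> c)"] n1 hnorm_nonneg[OF HH, of "\<iota> b"]
      unfolding sub by (meson mult_right_mono order_trans)
    have t2: "cmod (hinner H (\<iota> c) z - hinner H x z) \<le> e * hnorm H z"
      using ip_cont_l[OF HH, of "\<iota> c" z x] hnorm_sub_sym[OF HH, of "\<iota> c" x] c hnorm_nonneg[OF HH, of z]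
      by (metis less_eq_real_def mult_right_mono order_trans)
    have "cmod (hinner H (\<pi> a x) (\<iota> b) - hinner H x z) \<le>
       cmod (hinner H (\<pi> a x) (\<iota> b) - hinner H (\<pi> a (\<iota> c)) (\<iota> b)) + cmod (hinner H (\<iota> c) z - hinner H x z)"
      using norm_triangle_ineq[of "hinner H (\<pi> a x) (\<iota> b) - hinner H (\<pi> a (\<iota> c)) (\<iota> b)" "hinner H (\<iota> c) z - hinner H x z"]
      unfolding eq by simp
    also have "\<dots> \<le> C * e" using t1 t2 unfolding C_def by (simp add: algebra_simps)
    finally show "cmod (hinner H (\<pi> a x) (\<iota> b) - hinner H x z) \<le> C * e" .
  qed
  thus ?thesis unfolding z_def by simp
qed


lemma sum2_cong:
  assumes "\<And>d v c w. (d,v)\<in>set ds \<Longrightarrow> (c,w)\<in>set cs \<Longrightarrow> f d v c w = g d v c w"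
  shows "(\<Sum>(d,v)\<leftarrow>ds. \<Sum>(c,w)\<leftarrow>cs. f d v c w) = (\<Sum>(d,v)\<leftarrow>ds. \<Sum>(c,w)\<leftarrow>cs. (g d v c w :: complex))"
proof -
  have "map (\<lambda>(d,v). \<Sum>(c,w)\<leftarrow>cs. f d v c w) ds = map (\<lambda>(d,v). \<Sum>(c,w)\<leftarrow>cs. g d v c w) ds"
  proof (rule map_cong[OF refl])
    fix x assume x: "x \<in> set ds"
    obtain d v where dv: "x = (d,v)" by force
    have "map (\<lambda>(c,w). f d v c w) cs = map (\<lambda>(c,w). g d v c w) cs"
    proof (rule map_cong[OF refl])
      fix y assume y: "y \<in> set cs"
      obtain c w where cw: "y = (c,w)" by force
      show "(\<lambda>(c,w). f d v c w) y = (\<lambda>(c,w). g d v c w) y" using assms x y dv cw by simp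
    qed
    thus "(\<lambda>(d,v). \<Sum>(c,w)\<leftarrow>cs. f d v c w) x = (\<lambda>(d,v). \<Sum>(c,w)\<leftarrow>cs. g d v c w) x"
      unfolding dv prod.case by (rule arg_cong[where f = sum_list])
  qed
  thus ?thesis by (rule arg_cong[where f = sum_list])
qed

lemma sum_pr:
  "(\<Sum>(d,v)\<leftarrow>pr ds. \<Sum>(c,w)\<leftarrow>pr cs. F d v c w) = (\<Sum>(d,v)\<leftarrow>ds. \<Sum>(c,w)\<leftarrow>cs. (F d (prime v) c (prime w) :: complex))"
  by (simp add: pr_def o_def split_def)

lemma sum_list_zero2: "(\<forall>(c,w)\<in>set cs. g c w = 0) \<Longrightarrow> (\<Sum>(c,w)\<leftarrow>cs. g c w) = (0::complex)"
  by (induction cs) auto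

locale setting =
  fixes A :: "'a cstar_alg" and \<phi> :: "'a \<Rightarrow> complex"
    and A0 :: "'b cstar_alg" and \<tau>0 :: "'b \<Rightarrow> complex"
    and n m :: nat
    and X Y :: "nat \<Rightarrow> 'a" and X' Y' :: "nat \<Rightarrow> 'b"
    and H :: "'h hspace" and \<iota> :: "'a \<Rightarrow> 'h" and \<pi> :: "'a \<Rightarrow> 'h \<Rightarrow> 'h"
    and H0 :: "'k hspace" and \<iota>0 :: "'b \<Rightarrow> 'k" and \<pi>0 :: "'b \<Rightarrow> 'k \<Rightarrow> 'k"
  assumes ncps: "cstar_ncps A \<phi>"
    and sa_X: "\<forall>i<n. cstar A (X i) = X i"
    and sa_Y: "\<forall>j<m. cstar A (Y j) = Y j"
    and bip: "tracially_bipartite A \<phi> n m X Y"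
    and ncps0: "cstar_ncps A0 \<tau>0"
    and trace0: "tracial_on A0 \<tau>0 UNIV"
    and sa_X': "\<forall>i<n. cstar A0 (X' i) = X' i"
    and sa_Y': "\<forall>j<m. cstar A0 (Y' j) = Y' j"
    and moments: "\<forall>is js. (\<forall>i\<in>set is. i < n) \<longrightarrow> (\<forall>j\<in>set js. j < m) \<longrightarrow>
        \<phi> (evalw A X Y (map LX is @ map LY js)) =
        \<tau>0 (evalw A0 X' Y' (map LX is @ map LY (rev js)))"
    and gnsA: "gns A \<phi> H \<iota> \<pi>"
    and gnsA0: "gns A0 \<tau>0 H0 \<iota>0 \<pi>0"
begin

lemma CA: "cstar_algebra A" using ncps by (simp add: cstar_ncps_def)
lemma CA0: "cstar_algebra A0" using ncps0 by (simp add: cstar_ncps_def)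
lemma ST: "is_state A \<phi>" using ncps by (simp add: cstar_ncps_def)
lemma ST0: "is_state A0 \<tau>0" using ncps0 by (simp add: cstar_ncps_def)
lemma HH: "hilbert H" using gns_hilbert[OF gnsA] .
lemma HH0: "hilbert H0" using gns_hilbert[OF gnsA0] .

lemma XY_comm: "i < n \<Longrightarrow> j < m \<Longrightarrow> cmul A (X i) (Y j) = cmul A (Y j) (X i)"
  using bip unfolding tracially_bipartite_def by (meson alg_gen.gen imageI lessThan_iff)

lemma Y_comm_Xword:
  assumes "j < m" "valid_word n m u" "\<forall>l\<in>set u. isLX l"
  shows "cmul A (Y j) (evalw A X Y u) = cmul A (evalw A X Y u) (Y j)"
  using assms(2,3)
proof (induction u)
  case Nil thus ?case using CA by (simp add: ca_one_l ca_one_r)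
next
  case (Cons l u)
  obtain a where l: "l = LX a" using Cons.prems(2) by (cases l) auto
  have a: "a < n" using Cons.prems(1) l by (simp add: valid_word_def)
  have IH: "cmul A (Y j) (evalw A X Y u) = cmul A (evalw A X Y u) (Y j)"
    using Cons by (simp add: valid_word_def)
  have "cmul A (Y j) (cmul A (X a) (evalw A X Y u)) = cmul A (cmul A (Y j) (X a)) (evalw A X Y u)"
    using CA by (simp add: ca_mul_assoc)
  also have "\<dots> = cmul A (cmul A (X a) (Y j)) (evalw A X Y u)"
    using XY_comm[OF a assms(1)] by simp
  also have "\<dots> = cmul A (X a) (cmul A (Y j) (evalw A X Y u))"
    using CA by (simp add: ca_mul_assoc)
  also have "\<dots> = cmul A (cmul A (X a) (evalw A X Y u)) (Y j)"
    using CA IH by (simp add: ca_mul_assoc)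
  finally show ?case by (simp add: l)
qed

lemma evalw_sort:
  "valid_word n m w \<Longrightarrow> evalw A X Y w = evalw A X Y (filter isLX w @ filter isLY w)"
proof (induction w)
  case Nil thus ?case by simp
next
  case (Cons l w)
  have vw: "valid_word n m w" using Cons.prems by (simp add: valid_word_def)
  show ?case
  proof (cases l)
    case (LX a) thus ?thesis using Cons.IH[OF vw] by simp
  next
    case (LY b)
    have b: "b < m" using Cons.prems LY by (simp add: valid_word_def)
    have "evalw A X Y (l # w) = cmul A (Y b) (cmul A (evalw A X Y (filter isLX w)) (evalw A X Y (filter isLY w)))"
      using Cons.IH[OF vw] CA by (simp add: LY evalw_append)
    also have "\<dots> = cmul A (evalw A X Y (filter isLX w)) (cmul A (Y b) (evalw A X Y (filter isLY w)))"
      using Y_comm_Xword[OF b valid_word_filter[OF vw], of isLX] CA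
      by (simp add: ca_mul_assoc[symmetric])
    also have "\<dots> = evalw A X Y (filter isLX (l # w) @ filter isLY (l # w))"
      using CA by (simp add: LY evalw_append)
    finally show ?thesis .
  qed
qed

lemma phi_word: assumes "valid_word n m v"
  shows "\<phi> (evalw A X Y v) = \<tau>0 (evalw A0 X' Y' (prime v))"
proof -
  define ii where "ii = map idx (filter isLX v)"
  define jj where "jj = map idx (filter isLY v)"
  have 1: "map LX ii = filter isLX v" unfolding ii_def by (rule map_LX_idx) simp
  have 2: "map LY jj = filter isLY v" unfolding jj_def by (rule map_LY_idx) simp
  have 3: "\<forall>i\<in>set ii. i < n"
  proof
    fix i assume "i \<in> set ii"
    then obtain l where l: "l \<in> set v" "isLX l" "i = idx l" unfolding ii_def by auto
    have "valid_lett n m l" using assms l(1) by (simp add: valid_word_def)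
    thus "i < n" using l(2,3) by (cases l) auto
  qed
  have 4: "\<forall>j\<in>set jj. j < m"
  proof
    fix j assume "j \<in> set jj"
    then obtain l where l: "l \<in> set v" "isLY l" "j = idx l" unfolding jj_def by auto
    have "valid_lett n m l" using assms l(1) by (simp add: valid_word_def)
    thus "j < m" using l(2,3) by (cases l) auto
  qed
  have "\<phi> (evalw A X Y v) = \<phi> (evalw A X Y (map LX ii @ map LY jj))"
    using evalw_sort[OF assms] 1 2 by simp
  also have "\<dots> = \<tau>0 (evalw A0 X' Y' (map LX ii @ map LY (rev jj)))"
    using moments 3 4 by blast
  also have "\<dots> = \<tau>0 (evalw A0 X' Y' (prime v))"
    unfolding prime_def rev_map[symmetric] 1 2 ..
  finally show ?thesis .
qed

lemma trace_rot: "\<tau>0 (evalw A0 X' Y' (a @ b)) = \<tau>0 (evalw A0 X' Y' (b @ a))"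
  using trace0 CA0 unfolding tracial_on_def by (simp add: evalw_append)

lemma word_ip: assumes "valid_word n m v" "valid_word n m w"
  shows "\<phi> (evalw A X Y (rev v @ w)) = \<tau>0 (evalw A0 X' Y' (rev (prime v) @ prime w))"
proof -
  have "\<phi> (evalw A X Y (rev v @ w)) = \<tau>0 (evalw A0 X' Y' (prime (rev v @ w)))"
    using phi_word assms by simp
  also have "prime (rev v @ w) = rev (filter isLX v) @ (filter isLX w @ rev (filter isLY w) @ filter isLY v)"
    by (simp add: prime_def rev_filter)
  also have "rev (prime v) @ prime w = filter isLY v @ (rev (filter isLX v) @ filter isLX w @ rev (filter isLY w))"
    by (simp add: prime_def)
  ultimately show ?thesis using trace_rot by (metis append_assoc)
qed


lemma fy_split: assumes "q < length w" "w ! q = LX i"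
  shows "filter isLY (take q w) @ filter isLY (drop (Suc q) w) = filter isLY w"
proof -
  have "w = take q w @ w ! q # drop (Suc q) w" using id_take_nth_drop[OF assms(1)] .
  hence "filter isLY w = filter isLY (take q w @ w ! q # drop (Suc q) w)" by simp
  thus ?thesis using assms(2) by simp
qed

lemma conj_comb: assumes v: "valid_word n m w"
  shows "fdq_val A0 \<tau>0 X' Y' i (rev (prime (rev w))) = bfdq_val A \<phi> X Y i w"
proof -
  define G where "G = (\<lambda>a b. \<tau>0 (evalw A0 X' Y' (rev (filter isLY w) @ a)) * \<tau>0 (evalw A0 X' Y' b))"
  have r: "rev (prime (rev w)) = rev (filter isLY w) @ filter isLX w"
    by (simp add: prime_def rev_filter)
  have p: "\<forall>l\<in>set (rev (filter isLY w)). l \<noteq> LX i" by auto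
  have "fdq_val A0 \<tau>0 X' Y' i (rev (prime (rev w))) =
    (\<Sum>k\<in>{k. k < length (filter isLX w) \<and> filter isLX w ! k = LX i}.
       G (take k (filter isLX w)) (drop (Suc k) (filter isLX w)))"
    unfolding fdq_val_def r G_def
    by (rule sum_positions_prefix[OF p, where F = "\<lambda>a b. \<tau>0 (evalw A0 X' Y' a) * \<tau>0 (evalw A0 X' Y' b)"])
  also have "\<dots> = (\<Sum>q\<in>{q. q < length w \<and> w ! q = LX i}. G (filter isLX (take q w)) (filter isLX (drop (Suc q) w)))"
    by (rule sum_positions_filterX[symmetric])
  also have "\<dots> = bfdq_val A \<phi> X Y i w"
    unfolding bfdq_val_def
  proof (rule sum.cong[OF refl])
    fix q assume "q \<in> {q. q < length w \<and> w ! q = LX i}"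
    hence q: "q < length w" "w ! q = LX i" by auto
    have vt: "valid_word n m (take q w)" "valid_word n m (drop (Suc q) w)"
      using v by (simp_all add: valid_word_take valid_word_drop)
    have 1: "\<phi> (evalw A X Y (take q w @ filter isLY (drop (Suc q) w))) =
      \<tau>0 (evalw A0 X' Y' (rev (filter isLY w) @ filter isLX (take q w)))"
    proof -
      have "\<phi> (evalw A X Y (take q w @ filter isLY (drop (Suc q) w))) =
         \<tau>0 (evalw A0 X' Y' (prime (take q w @ filter isLY (drop (Suc q) w))))"
        using phi_word vt valid_word_filter by simp
      also have "prime (take q w @ filter isLY (drop (Suc q) w)) = filter isLX (take q w) @ rev (filter isLY w)"
        unfolding prime_def filter_append filter_isLX_isLY filter_isLX_isLX append_Nil2 fy_split[OF q] ..
      finally show ?thesis using trace_rot by simp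
    qed
    have 2: "\<phi> (evalw A X Y (filter isLX (drop (Suc q) w))) = \<tau>0 (evalw A0 X' Y' (filter isLX (drop (Suc q) w)))"
      using phi_word[OF valid_word_filter[OF vt(2)], of isLX]
      unfolding prime_def filter_isLX_isLY filter_isLX_isLX by simp
    show "G (filter isLX (take q w)) (filter isLX (drop (Suc q) w)) =
      \<phi> (evalw A X Y (take q w @ filter isLY (drop (Suc q) w))) * \<phi> (evalw A X Y (filter isLX (drop (Suc q) w)))"
      unfolding 1 2 G_def ..
  qed
  finally show ?thesis .
qed


definition "BB = alg_gen A (X ` {..<n} \<union> Y ` {..<m})"
definition "MM = L2 H \<iota> BB"
definition approx :: "'h \<Rightarrow> 'k \<Rightarrow> bool" where
  "approx x y \<longleftrightarrow> (\<forall>e>0. \<exists>cs. vcs n m cs \<and> hnorm H (hsub H x (\<iota> (eval_lin A X Y cs))) < e \<and>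
      hnorm H0 (hsub H0 y (\<iota>0 (eval_lin A0 X' Y' (pr cs)))) < e)"
definition Psi :: "'h \<Rightarrow> 'k" where "Psi x = (SOME y. approx x y)"

lemma K1: assumes "vcs n m cs" "vcs n m ds"
  shows "hinner H (\<iota> (eval_lin A X Y cs)) (\<iota> (eval_lin A X Y ds)) =
    hinner H0 (\<iota>0 (eval_lin A0 X' Y' (pr cs))) (\<iota>0 (eval_lin A0 X' Y' (pr ds)))"
proof -
  have w: "\<And>d v c w. (d,v)\<in>set ds \<Longrightarrow> (c,w)\<in>set cs \<Longrightarrow> \<phi> (evalw A X Y (rev v @ w)) = \<tau>0 (evalw A0 X' Y' (rev (prime v) @ prime w))"
    using assms word_ip unfolding vcs_def by fastforce
  show ?thesis
    unfolding ip_E[OF CA ST gnsA sa_X sa_Y assms(2)] ip_E[OF CA0 ST0 gnsA0 sa_X' sa_Y' vcs_pr[OF assms(2)]]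
    unfolding sum_pr using w by (intro sum2_cong) auto
qed

lemma K2: assumes "vcs n m cs" "vcs n m ds"
  shows "hnorm H (hsub H (\<iota> (eval_lin A X Y cs)) (\<iota> (eval_lin A X Y ds))) =
    hnorm H0 (hsub H0 (\<iota>0 (eval_lin A0 X' Y' (pr cs))) (\<iota>0 (eval_lin A0 X' Y' (pr ds))))"
  unfolding iota_E_sub[OF CA gnsA] iota_E_sub[OF CA0 gnsA0] hnorm_def pr_neg[symmetric] pr_append[symmetric]
  using K1[of "cs @ neg ds" "cs @ neg ds"] assms by simp

lemma K3: assumes "vcs n m cs"
  shows "hnorm H (\<iota> (eval_lin A X Y cs)) = hnorm H0 (\<iota>0 (eval_lin A0 X' Y' (pr cs)))"
  unfolding hnorm_def using K1[OF assms assms] by simp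

lemma approx_unique: assumes "approx x y1" "approx x y2" shows "y1 = y2"
proof -
  have "hnorm H0 (hsub H0 y1 y2) \<le> 0"
  proof (rule small_le[of _ 4])
    fix e :: real assume e: "e > 0"
    obtain cs1 where c1: "vcs n m cs1" "hnorm H (hsub H x (\<iota> (eval_lin A X Y cs1))) < e"
      "hnorm H0 (hsub H0 y1 (\<iota>0 (eval_lin A0 X' Y' (pr cs1)))) < e" using assms(1) e unfolding approx_def by blast
    obtain cs2 where c2: "vcs n m cs2" "hnorm H (hsub H x (\<iota> (eval_lin A X Y cs2))) < e"
      "hnorm H0 (hsub H0 y2 (\<iota>0 (eval_lin A0 X' Y' (pr cs2)))) < e" using assms(2) e unfolding approx_def by blast
    let ?a1 = "\<iota> (eval_lin A X Y cs1)" and ?a2 = "\<iota> (eval_lin A X Y cs2)"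
    let ?b1 = "\<iota>0 (eval_lin A0 X' Y' (pr cs1))" and ?b2 = "\<iota>0 (eval_lin A0 X' Y' (pr cs2))"
    have "hnorm H0 (hsub H0 ?b1 ?b2) = hnorm H (hsub H ?a1 ?a2)" using K2[OF c1(1) c2(1)] by simp
    also have "\<dots> \<le> hnorm H (hsub H ?a1 x) + hnorm H (hsub H x ?a2)" by (rule hnorm_tri_sub[OF HH])
    also have "\<dots> < 2 * e" using c1 c2 hnorm_sub_sym[OF HH, of ?a1 x] hnorm_sub_sym[OF HH, of x ?a2] by simp
    finally have m: "hnorm H0 (hsub H0 ?b1 ?b2) < 2 * e" .
    have "hnorm H0 (hsub H0 y1 y2) \<le> hnorm H0 (hsub H0 y1 ?b1) + hnorm H0 (hsub H0 ?b1 y2)" by (rule hnorm_tri_sub[OF HH0])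
    also have "hnorm H0 (hsub H0 ?b1 y2) \<le> hnorm H0 (hsub H0 ?b1 ?b2) + hnorm H0 (hsub H0 ?b2 y2)" by (rule hnorm_tri_sub[OF HH0])
    finally show "hnorm H0 (hsub H0 y1 y2) \<le> 4 * e"
      using m c1(3) c2(3) hnorm_sub_sym[OF HH0, of ?b2 y2] by simp
  qed simp
  hence "hnorm H0 (hsub H0 y1 y2) = 0" using hnorm_nonneg[OF HH0, of "hsub H0 y1 y2"] by simp
  thus ?thesis using hnorm_zero[OF HH0] hi_sub_eq[OF HH0] by blast
qed

lemma MM_approx: assumes "x \<in> MM" "e > 0"
  shows "\<exists>cs. vcs n m cs \<and> hnorm H (hsub H x (\<iota> (eval_lin A X Y cs))) < e"
proof -
  obtain s where s: "s \<in> \<iota> ` BB" "hnorm H (hsub H x s) < e"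
    using assms unfolding MM_def L2_def hclosure_def by blast
  then obtain b where b: "b \<in> BB" "s = \<iota> b" by blast
  obtain cs where "vcs n m cs" "b = eval_lin A X Y cs" using B_repr[OF CA] b(1) unfolding BB_def by blast
  thus ?thesis using s b by blast
qed

lemma approx_exists: assumes "x \<in> MM" shows "\<exists>y. approx x y"
proof -
  have "\<forall>k. \<exists>cs. vcs n m cs \<and> hnorm H (hsub H x (\<iota> (eval_lin A X Y cs))) < 1 / real (Suc k)"
    using MM_approx[OF assms] by simp
  then obtain f where f: "\<And>k. vcs n m (f k)" "\<And>k. hnorm H (hsub H x (\<iota> (eval_lin A X Y (f k)))) < 1 / real (Suc k)"
    by metis
  define g where "g k = \<iota>0 (eval_lin A0 X' Y' (pr (f k)))" for k
  have small: "\<exists>N. \<forall>k\<ge>N. 1 / real (Suc k) < e" if e0: "e > 0" for e :: real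
  proof -
    obtain N where N: "inverse (real (Suc N)) < e" using reals_Archimedean[OF e0] by blast
    have "1 / real (Suc k) < e" if "k \<ge> N" for k
    proof -
      have "1 / real (Suc k) \<le> 1 / real (Suc N)" using that by (simp add: frac_le)
      thus ?thesis using N by (simp add: inverse_eq_divide)
    qed
    thus ?thesis by blast
  qed
  have cauchy: "\<forall>e>0. \<exists>N. \<forall>k\<ge>N. \<forall>l\<ge>N. hnorm H0 (hsub H0 (g k) (g l)) < e"
  proof (intro allI impI)
    fix e :: real assume e: "e > 0"
    obtain N where N: "\<forall>k\<ge>N. 1 / real (Suc k) < e / 2" using small[of "e/2"] e by auto
    have "hnorm H0 (hsub H0 (g k) (g l)) < e" if "k \<ge> N" "l \<ge> N" for k l
    proof -
      have "hnorm H0 (hsub H0 (g k) (g l)) = hnorm H (hsub H (\<iota> (eval_lin A X Y (f k))) (\<iota> (eval_lin A X Y (f l))))"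
        unfolding g_def using K2[OF f(1) f(1)] by simp
      also have "\<dots> \<le> hnorm H (hsub H (\<iota> (eval_lin A X Y (f k))) x) + hnorm H (hsub H x (\<iota> (eval_lin A X Y (f l))))"
        by (rule hnorm_tri_sub[OF HH])
      also have "\<dots> < e / 2 + e / 2"
        using f(2)[of k] f(2)[of l] N that hnorm_sub_sym[OF HH, of "\<iota> (eval_lin A X Y (f k))" x]
        by (smt (verit))
      finally show ?thesis by simp
    qed
    thus "\<exists>N. \<forall>k\<ge>N. \<forall>l\<ge>N. hnorm H0 (hsub H0 (g k) (g l)) < e" by blast
  qed
  obtain y where y: "\<forall>e>0. \<exists>N. \<forall>k\<ge>N. hnorm H0 (hsub H0 (g k) y) < e"
    using hi_complete[OF HH0 cauchy] by blast
  have "approx x y" unfolding approx_def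
  proof (intro allI impI)
    fix e :: real assume e: "e > 0"
    obtain N1 where N1: "\<forall>k\<ge>N1. hnorm H0 (hsub H0 (g k) y) < e" using y e by blast
    obtain N2 where N2: "\<forall>k\<ge>N2. 1 / real (Suc k) < e" using small e by blast
    define k where "k = max N1 N2"
    have "hnorm H (hsub H x (\<iota> (eval_lin A X Y (f k)))) < e" using f(2)[of k] N2 unfolding k_def
      by (meson max.cobounded2 order_less_trans)
    moreover have "hnorm H0 (hsub H0 y (g k)) < e" using N1 hnorm_sub_sym[OF HH0, of y "g k"] unfolding k_def by simp
    ultimately show "\<exists>cs. vcs n m cs \<and> hnorm H (hsub H x (\<iota> (eval_lin A X Y cs))) < e \<and>
      hnorm H0 (hsub H0 y (\<iota>0 (eval_lin A0 X' Y' (pr cs)))) < e"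
      using f(1) unfolding g_def by blast
  qed
  thus ?thesis by blast
qed

lemma Psi_ok: "x \<in> MM \<Longrightarrow> approx x (Psi x)"
  unfolding Psi_def using approx_exists someI_ex by metis

lemma Psi_eq: assumes "approx x y" shows "Psi x = y"
proof -
  have "approx x (Psi x)" unfolding Psi_def using assms by (rule someI)
  thus ?thesis using approx_unique assms by blast
qed

lemma approx_E: assumes "vcs n m cs" shows "approx (\<iota> (eval_lin A X Y cs)) (\<iota>0 (eval_lin A0 X' Y' (pr cs)))"
  unfolding approx_def using assms hi_sub_self[OF HH] hi_sub_self[OF HH0] hnorm_hzero[OF HH] hnorm_hzero[OF HH0]
  by auto

lemma approx_add: assumes "approx x y" "approx x' y'" shows "approx (hadd H x x') (hadd H0 y y')"
  unfolding approx_def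
proof (intro allI impI)
  fix e :: real assume e: "e > 0"
  obtain cs where c: "vcs n m cs" "hnorm H (hsub H x (\<iota> (eval_lin A X Y cs))) < e/2"
      "hnorm H0 (hsub H0 y (\<iota>0 (eval_lin A0 X' Y' (pr cs)))) < e/2" using assms(1) e unfolding approx_def
    by (meson half_gt_zero)
  obtain cs' where c': "vcs n m cs'" "hnorm H (hsub H x' (\<iota> (eval_lin A X Y cs'))) < e/2"
      "hnorm H0 (hsub H0 y' (\<iota>0 (eval_lin A0 X' Y' (pr cs')))) < e/2" using assms(2) e unfolding approx_def
    by (meson half_gt_zero)
  have 1: "hnorm H (hsub H (hadd H x x') (\<iota> (eval_lin A X Y (cs @ cs')))) < e"
    unfolding E_append[OF CA] gns_add[OF gnsA]
    using hnorm_sub_add4[OF HH, of x x' "\<iota> (eval_lin A X Y cs)" "\<iota> (eval_lin A X Y cs')"] c c' by simp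
  have 2: "hnorm H0 (hsub H0 (hadd H0 y y') (\<iota>0 (eval_lin A0 X' Y' (pr (cs @ cs'))))) < e"
    unfolding pr_append E_append[OF CA0] gns_add[OF gnsA0]
    using hnorm_sub_add4[OF HH0, of y y' "\<iota>0 (eval_lin A0 X' Y' (pr cs))" "\<iota>0 (eval_lin A0 X' Y' (pr cs'))"] c c' by simp
  show "\<exists>cs. vcs n m cs \<and> hnorm H (hsub H (hadd H x x') (\<iota> (eval_lin A X Y cs))) < e \<and>
      hnorm H0 (hsub H0 (hadd H0 y y') (\<iota>0 (eval_lin A0 X' Y' (pr cs)))) < e"
    using 1 2 c(1) c'(1) by (intro exI[of _ "cs @ cs'"]) simp
qed

lemma approx_sc: assumes "approx x y" shows "approx (hsc H s x) (hsc H0 s y)"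
  unfolding approx_def
proof (intro allI impI)
  fix e :: real assume e: "e > 0"
  have e': "e / (cmod s + 1) > 0" using e by (auto intro!: divide_pos_pos add_nonneg_pos)
  obtain cs where c: "vcs n m cs" "hnorm H (hsub H x (\<iota> (eval_lin A X Y cs))) < e / (cmod s + 1)"
      "hnorm H0 (hsub H0 y (\<iota>0 (eval_lin A0 X' Y' (pr cs)))) < e / (cmod s + 1)"
    using assms e' unfolding approx_def by blast
  have s1: "\<iota> (eval_lin A X Y (scl s cs)) = hsc H s (\<iota> (eval_lin A X Y cs))"
    unfolding scl_def E_scale[OF CA] gns_sc[OF gnsA] ..
  have s2: "\<iota>0 (eval_lin A0 X' Y' (pr (scl s cs))) = hsc H0 s (\<iota>0 (eval_lin A0 X' Y' (pr cs)))"
    unfolding pr_scl unfolding scl_def E_scale[OF CA0] gns_sc[OF gnsA0] ..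
  have 1: "hnorm H (hsub H (hsc H s x) (\<iota> (eval_lin A X Y (scl s cs)))) < e"
    unfolding s1 hi_sub_sc[OF HH] hnorm_sc[OF HH] using scale_lt[OF _ e c(2)] hnorm_nonneg[OF HH] by simp
  have 2: "hnorm H0 (hsub H0 (hsc H0 s y) (\<iota>0 (eval_lin A0 X' Y' (pr (scl s cs))))) < e"
    unfolding s2 hi_sub_sc[OF HH0] hnorm_sc[OF HH0] using scale_lt[OF _ e c(3)] hnorm_nonneg[OF HH0] by simp
  show "\<exists>cs. vcs n m cs \<and> hnorm H (hsub H (hsc H s x) (\<iota> (eval_lin A X Y cs))) < e \<and>
      hnorm H0 (hsub H0 (hsc H0 s y) (\<iota>0 (eval_lin A0 X' Y' (pr cs)))) < e"
    using 1 2 c(1) by (intro exI[of _ "scl s cs"]) simp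
qed

lemma Psi_norm: assumes "x \<in> MM" shows "hnorm H0 (Psi x) = hnorm H x"
proof -
  have "\<bar>hnorm H0 (Psi x) - hnorm H x\<bar> \<le> 0"
  proof (rule small_le[of _ 2])
    fix e :: real assume e: "e > 0"
    obtain cs where c: "vcs n m cs" "hnorm H (hsub H x (\<iota> (eval_lin A X Y cs))) < e"
      "hnorm H0 (hsub H0 (Psi x) (\<iota>0 (eval_lin A0 X' Y' (pr cs)))) < e"
      using Psi_ok[OF assms] e unfolding approx_def by blast
    have "\<bar>hnorm H x - hnorm H (\<iota> (eval_lin A X Y cs))\<bar> < e" using hnorm_rev_tri[OF HH] c(2) order_le_less_trans by blast
    moreover have "\<bar>hnorm H0 (Psi x) - hnorm H0 (\<iota>0 (eval_lin A0 X' Y' (pr cs)))\<bar> < e"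
      using hnorm_rev_tri[OF HH0] c(3) order_le_less_trans by blast
    ultimately show "\<bar>hnorm H0 (Psi x) - hnorm H x\<bar> \<le> 2 * e" using K3[OF c(1)] by linarith
  qed simp
  thus ?thesis by simp
qed

lemma ip_pres: assumes "x \<in> MM" "vcs n m ds"
  shows "hinner H x (\<iota> (eval_lin A X Y ds)) = hinner H0 (Psi x) (\<iota>0 (eval_lin A0 X' Y' (pr ds)))"
proof -
  let ?z = "\<iota> (eval_lin A X Y ds)" and ?z' = "\<iota>0 (eval_lin A0 X' Y' (pr ds))"
  have "cmod (hinner H x ?z - hinner H0 (Psi x) ?z') \<le> 0"
  proof (rule small_le[of _ "2 * hnorm H ?z"])
    fix e :: real assume e: "e > 0"
    obtain cs where c: "vcs n m cs" "hnorm H (hsub H x (\<iota> (eval_lin A X Y cs))) < e"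
      "hnorm H0 (hsub H0 (Psi x) (\<iota>0 (eval_lin A0 X' Y' (pr cs)))) < e"
      using Psi_ok[OF assms(1)] e unfolding approx_def by blast
    let ?a = "\<iota> (eval_lin A X Y cs)" and ?a' = "\<iota>0 (eval_lin A0 X' Y' (pr cs))"
    have "hnorm H (hsub H x ?a) * hnorm H ?z \<le> e * hnorm H ?z"
      using c(2) by (intro mult_right_mono) (auto simp: hnorm_nonneg[OF HH])
    with ip_cont_l[OF HH, of x ?z ?a]
    have t1: "cmod (hinner H x ?z - hinner H ?a ?z) \<le> e * hnorm H ?z" by (rule order_trans)
    have "hnorm H0 (hsub H0 (Psi x) ?a') * hnorm H0 ?z' \<le> e * hnorm H0 ?z'"
      using c(3) by (intro mult_right_mono) (auto simp: hnorm_nonneg[OF HH0])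
    with ip_cont_l[OF HH0, of "Psi x" ?z' ?a']
    have t2: "cmod (hinner H0 (Psi x) ?z' - hinner H0 ?a' ?z') \<le> e * hnorm H ?z"
      unfolding K3[OF assms(2)] by (rule order_trans)
    have eq: "hinner H ?a ?z = hinner H0 ?a' ?z'" using K1[OF c(1) assms(2)] .
    have "cmod (hinner H x ?z - hinner H0 (Psi x) ?z') \<le>
        cmod (hinner H x ?z - hinner H ?a ?z) + cmod (hinner H0 (Psi x) ?z' - hinner H0 ?a' ?z')"
      using norm_triangle_ineq4[of "hinner H x ?z - hinner H ?a ?z" "hinner H0 (Psi x) ?z' - hinner H0 ?a' ?z'"]
      unfolding eq by simp
    also have "\<dots> \<le> 2 * hnorm H ?z * e" using add_mono[OF t1 t2] by (simp add: algebra_simps)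
    finally show "cmod (hinner H x ?z - hinner H0 (Psi x) ?z') \<le> 2 * hnorm H ?z * e" .
  qed (simp add: hnorm_nonneg[OF HH])
  thus ?thesis by simp
qed

lemma Psi_word: assumes "valid_word n m w"
  shows "Psi (\<iota> (evalw A X Y w)) = \<iota>0 (evalw A0 X' Y' (prime w))"
proof -
  have "approx (\<iota> (evalw A X Y w)) (\<iota>0 (evalw A0 X' Y' (prime w)))"
    using approx_E[of "[(1, w)]"] assms unfolding pr_single E_single[OF CA] E_single[OF CA0] vcs_single by blast
  thus ?thesis by (rule Psi_eq)
qed

lemma word_in_MM: assumes "valid_word n m w" shows "\<iota> (evalw A X Y w) \<in> MM"
proof -
  have b: "evalw A X Y w \<in> BB" unfolding BB_def by (rule evalw_in_B[OF assms])
  show ?thesis unfolding MM_def L2_def hclosure_def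
  proof (intro CollectI allI impI)
    fix e :: real assume "e > 0"
    thus "\<exists>s\<in>\<iota> ` BB. hnorm H (hsub H (\<iota> (evalw A X Y w)) s) < e"
      using b hi_sub_self[OF HH] hnorm_hzero[OF HH] by (intro bexI[of _ "\<iota> (evalw A X Y w)"]) auto
  qed
qed


lemma char_A: assumes "valid_word n m w"
  shows "hinner H (\<pi> (evalw A X Y w) \<xi>) (\<iota> (cone A)) = hinner H \<xi> (\<iota> (evalw A X Y (rev w)))"
  unfolding adjoint[OF CA gnsA] star_evalw[OF CA sa_X sa_Y assms] ca_one_r[OF CA] ..

lemma char_A0: assumes "valid_word n m w"
  shows "hinner H0 (\<pi>0 (evalw A0 X' Y' w) \<xi>) (\<iota>0 (cone A0)) = hinner H0 \<xi> (\<iota>0 (evalw A0 X' Y' (rev w)))"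
  unfolding adjoint[OF CA0 gnsA0] star_evalw[OF CA0 sa_X' sa_Y' assms] ca_one_r[OF CA0] ..

lemma orth_MM: assumes "\<And>w. valid_word n m w \<Longrightarrow> hinner H d (\<iota> (evalw A X Y w)) = 0" "x \<in> MM"
  shows "hinner H d x = 0"
proof -
  have z: "hinner H d (\<iota> (eval_lin A X Y cs)) = 0" if "vcs n m cs" for cs
    unfolding ip_E_r[OF CA gnsA] using that assms(1) by (intro sum_list_zero2) (auto simp: vcs_def)
  have "cmod (hinner H d x) \<le> 0"
  proof (rule small_le[of _ "hnorm H d"])
    fix e :: real assume e: "e > 0"
    obtain cs where c: "vcs n m cs" "hnorm H (hsub H x (\<iota> (eval_lin A X Y cs))) < e"
      using MM_approx[OF assms(2) e] by blast
    have "cmod (hinner H d x - hinner H d (\<iota> (eval_lin A X Y cs))) \<le> hnorm H d * hnorm H (hsub H x (\<iota> (eval_lin A X Y cs)))"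
      by (rule ip_cont_r[OF HH])
    also have "\<dots> \<le> hnorm H d * e" using c(2) by (intro mult_left_mono) (auto simp: hnorm_nonneg[OF HH])
    finally show "cmod (hinner H d x) \<le> hnorm H d * e" using z[OF c(1)] by simp
  qed (simp add: hnorm_nonneg[OF HH])
  thus ?thesis by simp
qed

lemma L2_MM: "L2 H \<iota> (alg_gen A (X ` {..<n} \<union> Y ` {..<m})) = MM"
  by (simp add: MM_def BB_def)

lemma conj_unique:
  assumes "is_left_bf_conj A \<phi> H \<iota> \<pi> n m X Y i \<xi>1" "is_left_bf_conj A \<phi> H \<iota> \<pi> n m X Y i \<xi>2"
  shows "\<xi>1 = \<xi>2"
proof -
  have in1: "\<xi>1 \<in> MM" and in2: "\<xi>2 \<in> MM" using assms unfolding is_left_bf_conj_def L2_MM by auto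
  define d where "d = hsub H \<xi>1 \<xi>2"
  have w: "hinner H d (\<iota> (evalw A X Y v)) = 0" if v: "valid_word n m v" for v
  proof -
    have "hinner H \<xi>1 (\<iota> (evalw A X Y v)) = bfdq_val A \<phi> X Y i (rev v)"
      using char_A[of "rev v" \<xi>1] v assms(1) unfolding is_left_bf_conj_def by simp
    moreover have "hinner H \<xi>2 (\<iota> (evalw A X Y v)) = bfdq_val A \<phi> X Y i (rev v)"
      using char_A[of "rev v" \<xi>2] v assms(2) unfolding is_left_bf_conj_def by simp
    ultimately show ?thesis unfolding d_def hi_ip_sub_l[OF HH] by simp
  qed
  have "hinner H d d = 0"
    unfolding d_def hi_ip_sub_r[OF HH] using orth_MM[OF w in1] orth_MM[OF w in2] unfolding d_def by simp
  hence "d = hzero H" by (rule hi_ip_def[OF HH])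
  thus ?thesis unfolding d_def by (rule hi_sub_eq[OF HH])
qed

lemma conj_part:
  assumes i: "i < n" and P: "orth_proj H0 (Psi ` L2 H \<iota> (alg_gen A (X ` {..<n} \<union> Y ` {..<m}))) P"
    and fc: "is_free_conj A0 \<tau>0 H0 \<iota>0 \<pi>0 n m X' Y' i \<xi>'"
  shows "(\<exists>!\<xi>. is_left_bf_conj A \<phi> H \<iota> \<pi> n m X Y i \<xi>) \<and>
          (\<forall>\<xi>. is_left_bf_conj A \<phi> H \<iota> \<pi> n m X Y i \<xi> \<longrightarrow> Psi \<xi> = P \<xi>')"
proof -
  have P': "P \<xi>' \<in> Psi ` MM" "\<And>y. y \<in> Psi ` MM \<Longrightarrow> hinner H0 (hsub H0 \<xi>' (P \<xi>')) y = 0"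
    using P unfolding orth_proj_def L2_MM by auto
  obtain \<xi>0 where x0: "\<xi>0 \<in> MM" "Psi \<xi>0 = P \<xi>'" using P'(1) by (metis imageE)
  have c0: "is_left_bf_conj A \<phi> H \<iota> \<pi> n m X Y i \<xi>0"
    unfolding is_left_bf_conj_def L2_MM
  proof (intro conjI allI impI)
    show "\<xi>0 \<in> MM" by (rule x0(1))
    fix w assume w: "valid_word n m w"
    let ?z0 = "\<iota>0 (evalw A0 X' Y' (prime (rev w)))"
    have zin: "?z0 \<in> Psi ` MM" using Psi_word[of "rev w"] word_in_MM[of "rev w"] w by force
    have "hinner H (\<pi> (evalw A X Y w) \<xi>0) (\<iota> (cone A)) = hinner H \<xi>0 (\<iota> (evalw A X Y (rev w)))"
      by (rule char_A[OF w])
    also have "\<dots> = hinner H0 (Psi \<xi>0) ?z0"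
      using ip_pres[OF x0(1), of "[(1, rev w)]"] w unfolding E_single[OF CA] pr_single E_single[OF CA0] vcs_single
      by simp
    also have "\<dots> = hinner H0 \<xi>' ?z0"
      using P'(2)[OF zin] unfolding x0(2) hi_ip_sub_l[OF HH0] by simp
    also have "\<dots> = hinner H0 (\<pi>0 (evalw A0 X' Y' (rev (prime (rev w)))) \<xi>') (\<iota>0 (cone A0))"
      using char_A0[of "rev (prime (rev w))" \<xi>'] w valid_word_prime[of n m "rev w"] by simp
    also have "\<dots> = fdq_val A0 \<tau>0 X' Y' i (rev (prime (rev w)))"
      using fc w valid_word_prime[of n m "rev w"] unfolding is_free_conj_def by simp
    also have "\<dots> = bfdq_val A \<phi> X Y i w" by (rule conj_comb[OF w])
    finally show "hinner H (\<pi> (evalw A X Y w) \<xi>0) (\<iota> (cone A)) = bfdq_val A \<phi> X Y i w" .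
  qed
  show ?thesis using c0 conj_unique x0(2) by blast
qed

lemma main:
  "\<exists>\<Psi>. isometry_on H (L2 H \<iota> (alg_gen A (X ` {..<n} \<union> Y ` {..<m}))) H0 \<Psi> \<and>
      (\<forall>is js. (\<forall>i\<in>set is. i < n) \<longrightarrow> (\<forall>j\<in>set js. j < m) \<longrightarrow>
        \<Psi> (\<iota> (evalw A X Y (map LX is @ map LY js))) =
        \<iota>0 (evalw A0 X' Y' (map LX is @ map LY (rev js)))) \<and>
      (\<forall>i<n. \<forall>P. orth_proj H0 (\<Psi> ` L2 H \<iota> (alg_gen A (X ` {..<n} \<union> Y ` {..<m}))) P \<longrightarrow>
        (\<forall>\<xi>'. is_free_conj A0 \<tau>0 H0 \<iota>0 \<pi>0 n m X' Y' i \<xi>' \<longrightarrow>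
          (\<exists>!\<xi>. is_left_bf_conj A \<phi> H \<iota> \<pi> n m X Y i \<xi>) \<and>
          (\<forall>\<xi>. is_left_bf_conj A \<phi> H \<iota> \<pi> n m X Y i \<xi> \<longrightarrow> \<Psi> \<xi> = P \<xi>')))"
proof -
  have 1: "isometry_on H (L2 H \<iota> (alg_gen A (X ` {..<n} \<union> Y ` {..<m}))) H0 Psi"
    unfolding isometry_on_def L2_MM
    using Psi_eq[OF approx_add[OF Psi_ok Psi_ok]] Psi_eq[OF approx_sc[OF Psi_ok]] Psi_norm by blast
  have 2: "\<forall>is js. (\<forall>i\<in>set is. i < n) \<longrightarrow> (\<forall>j\<in>set js. j < m) \<longrightarrow>
        Psi (\<iota> (evalw A X Y (map LX is @ map LY js))) =
        \<iota>0 (evalw A0 X' Y' (map LX is @ map LY (rev js)))"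
  proof (intro allI impI)
  fix ii jj assume hi: "\<forall>i\<in>set ii. i < n" and hj: "\<forall>j\<in>set jj. j < m"
  have v: "valid_word n m (map LX ii @ map LY jj)" using hi hj by (auto simp: valid_word_def)
  have p: "prime (map LX ii @ map LY jj) = map LX ii @ map LY (rev jj)"
    by (simp add: prime_def filter_map o_def rev_map)
  show "Psi (\<iota> (evalw A X Y (map LX ii @ map LY jj))) = \<iota>0 (evalw A0 X' Y' (map LX ii @ map LY (rev jj)))"
    using Psi_word[OF v] unfolding p .
  qed
  show ?thesis using 1 2 conj_part by blast
qed

end


theorem lemma2p26:
  fixes A :: "'a cstar_alg" and \<phi> :: "'a \<Rightarrow> complex"
    and A0 :: "'b cstar_alg" and \<tau>0 :: "'b \<Rightarrow> complex"
    and n m :: nat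
    and X Y :: "nat \<Rightarrow> 'a" and X' Y' :: "nat \<Rightarrow> 'b"
    and H :: "'h hspace" and \<iota> :: "'a \<Rightarrow> 'h" and \<pi> :: "'a \<Rightarrow> 'h \<Rightarrow> 'h"
    and H0 :: "'k hspace" and \<iota>0 :: "'b \<Rightarrow> 'k" and \<pi>0 :: "'b \<Rightarrow> 'k \<Rightarrow> 'k"
  assumes ncps: "cstar_ncps A \<phi>"
    and sa_X: "\<forall>i<n. cstar A (X i) = X i"
    and sa_Y: "\<forall>j<m. cstar A (Y j) = Y j"
    and bip: "tracially_bipartite A \<phi> n m X Y"
    and norel: "no_other_relations A n m X Y"
    and ncps0: "cstar_ncps A0 \<tau>0"
    and trace0: "tracial_on A0 \<tau>0 UNIV"
    and sa_X': "\<forall>i<n. cstar A0 (X' i) = X' i"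
    and sa_Y': "\<forall>j<m. cstar A0 (Y' j) = Y' j"
    and moments: "\<forall>is js. (\<forall>i\<in>set is. i < n) \<longrightarrow> (\<forall>j\<in>set js. j < m) \<longrightarrow>
        \<phi> (evalw A X Y (map LX is @ map LY js)) =
        \<tau>0 (evalw A0 X' Y' (map LX is @ map LY (rev js)))"
    and gnsA: "gns A \<phi> H \<iota> \<pi>"
    and gnsA0: "gns A0 \<tau>0 H0 \<iota>0 \<pi>0"
  shows "\<exists>\<Psi>. isometry_on H (L2 H \<iota> (alg_gen A (X ` {..<n} \<union> Y ` {..<m}))) H0 \<Psi> \<and>
      (\<forall>is js. (\<forall>i\<in>set is. i < n) \<longrightarrow> (\<forall>j\<in>set js. j < m) \<longrightarrow>
        \<Psi> (\<iota> (evalw A X Y (map LX is @ map LY js))) =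
        \<iota>0 (evalw A0 X' Y' (map LX is @ map LY (rev js)))) \<and>
      (\<forall>i<n. \<forall>P. orth_proj H0 (\<Psi> ` L2 H \<iota> (alg_gen A (X ` {..<n} \<union> Y ` {..<m}))) P \<longrightarrow>
        (\<forall>\<xi>'. is_free_conj A0 \<tau>0 H0 \<iota>0 \<pi>0 n m X' Y' i \<xi>' \<longrightarrow>
          (\<exists>!\<xi>. is_left_bf_conj A \<phi> H \<iota> \<pi> n m X Y i \<xi>) \<and>
          (\<forall>\<xi>. is_left_bf_conj A \<phi> H \<iota> \<pi> n m X Y i \<xi> \<longrightarrow> \<Psi> \<xi> = P \<xi>')))"
proof -
  interpret setting A \<phi> A0 \<tau>0 n m X Y X' Y' H \<iota> \<pi> H0 \<iota>0 \<pi>0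
    by (rule setting.intro[OF ncps sa_X sa_Y bip ncps0 trace0 sa_X' sa_Y' moments gnsA gnsA0])
  show ?thesis by (rule main)
qed

end
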